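(* Let $W=I_2(k)$ be the dihedral group of order $2k$, $k\ge2$. Then $$\operatorname{Cat}^{(1)}(W;q,t)=[k+1]_{q,t}+qt=q^k+q^{k-1}t+\dots+qt^{k-1}+t^k+qt.$$
   Context: $W=I_2(k)$ acts as a real reflection group on $\mathbb{C}^2$, identically on the variables $(x_1,x_2)$ and $(y_1,y_2)$ of $\mathbb{C}[\mathbf{x},\mathbf{y}]=\mathbb{C}[x_1,x_2,y_1,y_2]$. A polynomial $p$ is determinantal if $\omega(p)=\det(\omega)p$ for all $\omega\in W$; $\mathcal{A}$ is the ideal generated by all determinantal polynomials. The $q,t$-Fu\ss-Catalan number $\operatorname{Cat}^{(m)}(W;q,t)$ is the bigraded Hilbert series $\sum_{i,j}\dim(M_{i,j})q^it^j$ of $M=\mathcal{A}^m/\langle\mathbf{x},\mathbf{y}\rangle\mathcal{A}^m$, bigraded by ($\mathbf{x}$-degree, $\mathbf{y}$-degree), where $\langle\mathbf{x},\mathbf{y}\rangle$ is the ideal of polynomials without constant term. $[n]_{q,t}=(q^n-t^n)/(q-t)=q^{n-1}+q^{n-2}t+\dots+t^{n-1}$. *)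

theory Defs
  imports Complex_Main "HOL-Library.Poly_Mapping"
begin

datatype var = X1 | X2 | Y1 | Y2

type_synonym poly4 = "(var \<Rightarrow>\<^sub>0 nat) \<Rightarrow>\<^sub>0 complex"

definition pconst :: "complex \<Rightarrow> poly4" where
  "pconst c = Poly_Mapping.single 0 c"

definition pvar :: "var \<Rightarrow> poly4" where
  "pvar v = Poly_Mapping.single (Poly_Mapping.single v 1) 1"

definition subst :: "(var \<Rightarrow> poly4) \<Rightarrow> poly4 \<Rightarrow> poly4" where
  "subst \<sigma> p = (\<Sum>mo\<in>Poly_Mapping.keys p. pconst (Poly_Mapping.lookup p mo) *
                   (\<Prod>v\<in>Poly_Mapping.keys mo. \<sigma> v ^ Poly_Mapping.lookup mo v))"

text \<open>2x2 complex matrices, indices 0 and 1.\<close>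
type_synonym mat2 = "nat \<Rightarrow> nat \<Rightarrow> complex"

definition det2 :: "mat2 \<Rightarrow> complex" where
  "det2 w = w 0 0 * w 1 1 - w 0 1 * w 1 0"

definition rot :: "nat \<Rightarrow> nat \<Rightarrow> mat2" where
  "rot k j = (let c = complex_of_real (cos (2 * pi * real j / real k));
                  s = complex_of_real (sin (2 * pi * real j / real k))
              in (\<lambda>a b. if a = 0 \<and> b = 0 then c else if a = 0 \<and> b = 1 then - s
                        else if a = 1 \<and> b = 0 then s else if a = 1 \<and> b = 1 then c else 0))"

definition refl :: "nat \<Rightarrow> nat \<Rightarrow> mat2" where
  "refl k j = (let c = complex_of_real (cos (2 * pi * real j / real k));
                   s = complex_of_real (sin (2 * pi * real j / real k))
              in (\<lambda>a b. if a = 0 \<and> b = 0 then c else if a = 0 \<and> b = 1 then s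
                        else if a = 1 \<and> b = 0 then s else if a = 1 \<and> b = 1 then - c else 0))"

definition dihedral :: "nat \<Rightarrow> mat2 set" where
  "dihedral k = {rot k j | j. j < k} \<union> {refl k j | j. j < k}"

definition act :: "mat2 \<Rightarrow> poly4 \<Rightarrow> poly4" where
  "act w p = subst (\<lambda>v. case v of
       X1 \<Rightarrow> pconst (w 0 0) * pvar X1 + pconst (w 0 1) * pvar X2
     | X2 \<Rightarrow> pconst (w 1 0) * pvar X1 + pconst (w 1 1) * pvar X2
     | Y1 \<Rightarrow> pconst (w 0 0) * pvar Y1 + pconst (w 0 1) * pvar Y2
     | Y2 \<Rightarrow> pconst (w 1 0) * pvar Y1 + pconst (w 1 1) * pvar Y2) p"

definition determinantal :: "mat2 set \<Rightarrow> poly4 \<Rightarrow> bool" where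
  "determinantal W p \<longleftrightarrow> (\<forall>w\<in>W. act w p = pconst (det2 w) * p)"

definition ideal_gen :: "poly4 set \<Rightarrow> poly4 set" where
  "ideal_gen S = module.span ((*) :: poly4 \<Rightarrow> poly4 \<Rightarrow> poly4) S"

fun ideal_pow :: "poly4 set \<Rightarrow> nat \<Rightarrow> poly4 set" where
  "ideal_pow I 0 = UNIV"
| "ideal_pow I (Suc n) = ideal_gen {a * b | a b. a \<in> ideal_pow I n \<and> b \<in> I}"

definition detideal :: "mat2 set \<Rightarrow> poly4 set" where
  "detideal W = ideal_gen {p. determinantal W p}"

text \<open><x,y> J: the product of the ideal of polynomials without constant term with J.\<close>
definition max_times :: "poly4 set \<Rightarrow> poly4 set" where
  "max_times J = ideal_gen {f * a | f a. Poly_Mapping.lookup f 0 = 0 \<and> a \<in> J}"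

definition xdeg :: "(var \<Rightarrow>\<^sub>0 nat) \<Rightarrow> nat" where
  "xdeg m = Poly_Mapping.lookup m X1 + Poly_Mapping.lookup m X2"

definition ydeg :: "(var \<Rightarrow>\<^sub>0 nat) \<Rightarrow> nat" where
  "ydeg m = Poly_Mapping.lookup m Y1 + Poly_Mapping.lookup m Y2"

definition bihom :: "poly4 set \<Rightarrow> nat \<Rightarrow> nat \<Rightarrow> poly4 set" where
  "bihom S i j = {p \<in> S. \<forall>m\<in>Poly_Mapping.keys p. xdeg m = i \<and> ydeg m = j}"

definition cdim :: "poly4 set \<Rightarrow> nat" where
  "cdim V = vector_space.dim (\<lambda>c p. pconst c * p) V"

text \<open>dim M_{i,j} for M = A^m / <x,y>A^m.  Since A^m and <x,y>A^m are bihomogeneous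
  ideals, M_{i,j} = (A^m)_{i,j} / (<x,y>A^m)_{i,j}, and both pieces are finite-dimensional,
  so its dimension is the difference of dimensions.\<close>
definition catdim :: "nat \<Rightarrow> nat \<Rightarrow> nat \<Rightarrow> nat \<Rightarrow> nat" where
  "catdim m k i j =
     (let Am = ideal_pow (detideal (dihedral k)) m
      in cdim (bihom Am i j) - cdim (bihom (max_times Am) i j))"

end

theory Submission
  imports Defs
begin


lemma pconst_add: "pconst (a + b) = pconst a + pconst b"
  by (simp add: pconst_def single_add)
lemma pconst_mult: "pconst a * pconst b = pconst (a * b)"
  by (simp add: pconst_def mult_single)
lemma pconst_0[simp]: "pconst 0 = 0" by (simp add: pconst_def)
lemma pconst_1[simp]: "pconst 1 = 1" by (simp add: pconst_def)
lemma pconst_minus: "pconst (- a) = - pconst a" by (simp add: pconst_def single_uminus)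
lemma pconst_diff: "pconst (a - b) = pconst a - pconst b" by (simp add: pconst_def single_diff)
lemma pconst_sum: "pconst (sum f S) = (\<Sum>x\<in>S. pconst (f x))"
  by (induction S rule: infinite_finite_induct) (auto simp: pconst_add)
lemma pconst_prod: "pconst (prod f S) = (\<Prod>x\<in>S. pconst (f x))"
  by (induction S rule: infinite_finite_induct) (auto simp: pconst_mult[symmetric])
lemma pconst_power: "pconst (a ^ n) = pconst a ^ n"
  by (induction n) (auto simp: pconst_mult[symmetric])

lemma lookup_pconst_mult: "Poly_Mapping.lookup (pconst c * p) m = c * Poly_Mapping.lookup p m"
proof -
  have "pconst c * p = Poly_Mapping.map ((*) c) p"
    by (simp add: pconst_def mult_map_scale_conv_mult)
  then show ?thesis by (simp add: Poly_Mapping.map.rep_eq when_def)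
qed

lemma lookup_pconst: "Poly_Mapping.lookup (pconst c) m = (if m = 0 then c else 0)"
  by (simp add: pconst_def lookup_single)

lemma poly_sum_singles: "p = (\<Sum>m\<in>Poly_Mapping.keys p. Poly_Mapping.single m (Poly_Mapping.lookup p m))"
  by (rule poly_mapping_eqI) (auto simp: lookup_sum lookup_single when_def in_keys_iff
     sum.delta'[unfolded] intro: sum.neutral)

lemma UNIV_var: "(UNIV :: var set) = {X1, X2, Y1, Y2}"
  by (auto intro: var.exhaust)
lemma finite_var[simp]: "finite (UNIV :: var set)"
  by (simp add: UNIV_var)

definition mon :: "(var \<Rightarrow> poly4) \<Rightarrow> (var \<Rightarrow>\<^sub>0 nat) \<Rightarrow> poly4" where
  "mon \<sigma> m = (\<Prod>v\<in>Poly_Mapping.keys m. \<sigma> v ^ Poly_Mapping.lookup m v)"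

lemma mon_UNIV: "mon \<sigma> m = (\<Prod>v\<in>UNIV. \<sigma> v ^ Poly_Mapping.lookup m v)"
  unfolding mon_def by (rule prod.mono_neutral_left) (auto simp: in_keys_iff)

lemma mon4: "mon \<sigma> m = \<sigma> X1 ^ Poly_Mapping.lookup m X1 * \<sigma> X2 ^ Poly_Mapping.lookup m X2 *
   \<sigma> Y1 ^ Poly_Mapping.lookup m Y1 * \<sigma> Y2 ^ Poly_Mapping.lookup m Y2"
  by (simp add: mon_UNIV UNIV_var mult.assoc)

lemma mon_add: "mon \<sigma> (a + b) = mon \<sigma> a * mon \<sigma> b"
  by (simp add: mon_UNIV lookup_add power_add prod.distrib)

lemma mon_0[simp]: "mon \<sigma> 0 = 1" by (simp add: mon_def)

lemma subst_alt: "subst \<sigma> p = (\<Sum>m\<in>Poly_Mapping.keys p. pconst (Poly_Mapping.lookup p m) * mon \<sigma> m)"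
  by (simp add: subst_def mon_def)

lemma subst_superset:
  assumes "finite S" "Poly_Mapping.keys p \<subseteq> S"
  shows "subst \<sigma> p = (\<Sum>m\<in>S. pconst (Poly_Mapping.lookup p m) * mon \<sigma> m)"
  unfolding subst_alt using assms
  by (intro sum.mono_neutral_left) (auto simp: in_keys_iff)

lemma subst_0[simp]: "subst \<sigma> 0 = 0" by (simp add: subst_alt)

lemma subst_add: "subst \<sigma> (p + q) = subst \<sigma> p + subst \<sigma> q"
proof -
  let ?S = "Poly_Mapping.keys p \<union> Poly_Mapping.keys q"
  have "subst \<sigma> (p + q) = (\<Sum>m\<in>?S. pconst (Poly_Mapping.lookup (p+q) m) * mon \<sigma> m)"
    by (rule subst_superset) (auto dest: subsetD[OF keys_add])
  also have "\<dots> = (\<Sum>m\<in>?S. pconst (Poly_Mapping.lookup p m) * mon \<sigma> m) +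
                  (\<Sum>m\<in>?S. pconst (Poly_Mapping.lookup q m) * mon \<sigma> m)"
    by (simp add: lookup_add pconst_add distrib_right sum.distrib)
  also have "\<dots> = subst \<sigma> p + subst \<sigma> q"
    by (simp add: subst_superset[symmetric])
  finally show ?thesis .
qed

lemma subst_sum: "subst \<sigma> (sum f S) = (\<Sum>x\<in>S. subst \<sigma> (f x))"
  by (induction S rule: infinite_finite_induct) (auto simp: subst_add)

lemma subst_minus: "subst \<sigma> (- p) = - subst \<sigma> p"
  using subst_add[of \<sigma> p "-p"] by (simp add: eq_neg_iff_add_eq_0 add.commute)

lemma subst_diff: "subst \<sigma> (p - q) = subst \<sigma> p - subst \<sigma> q"
  using subst_add[of \<sigma> p "-q"] by (simp add: subst_minus)

lemma subst_single: "subst \<sigma> (Poly_Mapping.single m c) = pconst c * mon \<sigma> m"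
  by (subst subst_superset[of "{m}"]) (auto simp: lookup_single)

lemma subst_mult: "subst \<sigma> (p * q) = subst \<sigma> p * subst \<sigma> q"
proof -
  have "p * q = (\<Sum>a\<in>Poly_Mapping.keys p. Poly_Mapping.single a (Poly_Mapping.lookup p a)) *
     (\<Sum>b\<in>Poly_Mapping.keys q. Poly_Mapping.single b (Poly_Mapping.lookup q b))"
    using poly_sum_singles[of p] poly_sum_singles[of q] by simp
  also have "\<dots> = (\<Sum>a\<in>Poly_Mapping.keys p. \<Sum>b\<in>Poly_Mapping.keys q.
      Poly_Mapping.single (a + b) (Poly_Mapping.lookup p a * Poly_Mapping.lookup q b))"
    by (simp add: sum_product mult_single)
  finally have pq: "p * q = \<dots>" .
  have "subst \<sigma> (p * q) = (\<Sum>a\<in>Poly_Mapping.keys p. \<Sum>b\<in>Poly_Mapping.keys q.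
      pconst (Poly_Mapping.lookup p a) * mon \<sigma> a * (pconst (Poly_Mapping.lookup q b) * mon \<sigma> b))"
    unfolding pq subst_sum subst_single
    by (intro sum.cong refl) (simp add: mon_add pconst_mult[symmetric] mult_ac)
  also have "\<dots> = subst \<sigma> p * subst \<sigma> q"
    by (simp add: subst_alt sum_product)
  finally show ?thesis .
qed

lemma subst_pconst[simp]: "subst \<sigma> (pconst c) = pconst c"
  by (simp add: pconst_def subst_single)

lemma subst_1[simp]: "subst \<sigma> 1 = 1"
  using subst_pconst[of \<sigma> 1] by simp

lemma subst_pvar[simp]: "subst \<sigma> (pvar v) = \<sigma> v"
  by (simp add: pvar_def subst_single mon_def)

lemma subst_power: "subst \<sigma> (p ^ n) = subst \<sigma> p ^ n"
  by (induction n) (auto simp: subst_mult)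

lemma subst_prod: "subst \<sigma> (prod f S) = (\<Prod>x\<in>S. subst \<sigma> (f x))"
  by (induction S rule: infinite_finite_induct) (auto simp: subst_mult)

lemma subst_mon: "subst \<sigma> (mon \<tau> m) = mon (\<lambda>v. subst \<sigma> (\<tau> v)) m"
  by (simp add: mon_def subst_prod subst_power)

lemma subst_comp: "subst \<sigma> (subst \<tau> p) = subst (\<lambda>v. subst \<sigma> (\<tau> v)) p"
  by (simp add: subst_alt[of \<tau>] subst_sum subst_mult subst_mon subst_alt[of "\<lambda>v. subst \<sigma> (\<tau> v)"])

lemma pvar_power: "pvar v ^ n = Poly_Mapping.single (Poly_Mapping.single v n) 1"
  by (induction n) (auto simp: pvar_def mult_single single_add[symmetric])

lemma prod_single1: "(\<Prod>x\<in>S. Poly_Mapping.single (f x) (1::complex)) = Poly_Mapping.single (sum f S) 1"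
  by (induction S rule: infinite_finite_induct) (auto simp: mult_single)

lemma mon_pvar: "mon pvar m = Poly_Mapping.single m 1"
proof -
  have "mon pvar m = Poly_Mapping.single (\<Sum>v\<in>Poly_Mapping.keys m. Poly_Mapping.single v (Poly_Mapping.lookup m v)) 1"
    by (simp add: mon_def pvar_power prod_single1)
  also have "\<dots> = Poly_Mapping.single m 1"
    using poly_sum_singles[of m] by simp
  finally show ?thesis .
qed

lemma pconst_single1: "pconst c * Poly_Mapping.single m 1 = Poly_Mapping.single m c"
  by (simp add: pconst_def mult_single)

lemma subst_id: "subst pvar p = p"
  by (simp add: subst_alt mon_pvar pconst_single1 poly_sum_singles[symmetric])

definition mnm :: "nat \<Rightarrow> nat \<Rightarrow> nat \<Rightarrow> nat \<Rightarrow> (var \<Rightarrow>\<^sub>0 nat)" where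
  "mnm a b c d = Poly_Mapping.single X1 a + Poly_Mapping.single X2 b +
     Poly_Mapping.single Y1 c + Poly_Mapping.single Y2 d"

lemma lookup_mono[simp]:
  "Poly_Mapping.lookup (mnm a b c d) X1 = a"
  "Poly_Mapping.lookup (mnm a b c d) X2 = b"
  "Poly_Mapping.lookup (mnm a b c d) Y1 = c"
  "Poly_Mapping.lookup (mnm a b c d) Y2 = d"
  by (simp_all add: mnm_def lookup_add lookup_single)

lemma mono_eq: "m = mnm (Poly_Mapping.lookup m X1) (Poly_Mapping.lookup m X2)
    (Poly_Mapping.lookup m Y1) (Poly_Mapping.lookup m Y2)"
  by (rule poly_mapping_eqI) (case_tac k; simp)

lemma mono_inj[simp]: "mnm a b c d = mnm a' b' c' d' \<longleftrightarrow> a = a' \<and> b = b' \<and> c = c' \<and> d = d'"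
proof
  assume h: "mnm a b c d = mnm a' b' c' d'"
  have "Poly_Mapping.lookup (mnm a b c d) X1 = Poly_Mapping.lookup (mnm a' b' c' d') X1"
       "Poly_Mapping.lookup (mnm a b c d) X2 = Poly_Mapping.lookup (mnm a' b' c' d') X2"
       "Poly_Mapping.lookup (mnm a b c d) Y1 = Poly_Mapping.lookup (mnm a' b' c' d') Y1"
       "Poly_Mapping.lookup (mnm a b c d) Y2 = Poly_Mapping.lookup (mnm a' b' c' d') Y2"
    using h by simp_all
  then show "a = a' \<and> b = b' \<and> c = c' \<and> d = d'" by simp
qed simp

lemma mono_add: "mnm a b c d + mnm a' b' c' d' = mnm (a+a') (b+b') (c+c') (d+d')"
  by (rule poly_mapping_eqI) (case_tac k; simp add: lookup_add)

lemma mono_0: "mnm 0 0 0 0 = 0"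
  by (simp add: mnm_def)

lemma mon_mono: "mon \<sigma> (mnm a b c d) = \<sigma> X1 ^ a * \<sigma> X2 ^ b * \<sigma> Y1 ^ c * \<sigma> Y2 ^ d"
  by (simp add: mon4)


definition tdeg :: "(var \<Rightarrow>\<^sub>0 nat) \<Rightarrow> nat" where
  "tdeg m = Poly_Mapping.lookup m X1 + Poly_Mapping.lookup m X2 + Poly_Mapping.lookup m Y1 + Poly_Mapping.lookup m Y2"

lemma tdeg_add: "tdeg (a + b) = tdeg a + tdeg b"
  by (simp add: tdeg_def lookup_add)
lemma xdeg_add: "xdeg (a + b) = xdeg a + xdeg b"
  by (simp add: xdeg_def lookup_add)
lemma ydeg_add: "ydeg (a + b) = ydeg a + ydeg b"
  by (simp add: ydeg_def lookup_add)
lemma tdeg_xy: "tdeg m = xdeg m + ydeg m"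
  by (simp add: tdeg_def xdeg_def ydeg_def)
lemma tdeg_0_iff: "tdeg m = 0 \<longleftrightarrow> m = 0"
proof
  assume "tdeg m = 0"
  then have "m = mnm 0 0 0 0" by (subst mono_eq) (simp add: tdeg_def)
  then show "m = 0" by (simp add: mono_0)
qed (simp add: tdeg_def)

definition hom :: "nat \<Rightarrow> nat \<Rightarrow> poly4 \<Rightarrow> bool" where
  "hom i j p \<longleftrightarrow> (\<forall>m\<in>Poly_Mapping.keys p. xdeg m = i \<and> ydeg m = j)"

lemma bihom_alt: "bihom S i j = {p\<in>S. hom i j p}"
  by (simp add: bihom_def hom_def)

lemma keys_pconst_mult: "Poly_Mapping.keys (pconst c * p) \<subseteq> Poly_Mapping.keys p"
  by (auto simp: in_keys_iff lookup_pconst_mult)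

lemma hom_0[simp]: "hom i j 0" by (simp add: hom_def)
lemma hom_add: "hom i j p \<Longrightarrow> hom i j q \<Longrightarrow> hom i j (p + q)"
  unfolding hom_def by (auto dest!: subsetD[OF keys_add])
lemma hom_smult: "hom i j p \<Longrightarrow> hom i j (pconst c * p)"
  unfolding hom_def by (auto dest!: subsetD[OF keys_pconst_mult])
lemma hom_minus: "hom i j p \<Longrightarrow> hom i j (- p)"
  unfolding hom_def by simp
lemma hom_diff: "hom i j p \<Longrightarrow> hom i j q \<Longrightarrow> hom i j (p - q)"
  using hom_add[of i j p "-q"] hom_minus by simp
lemma hom_sum: "(\<And>x. x \<in> S \<Longrightarrow> hom i j (f x)) \<Longrightarrow> hom i j (sum f S)"
  by (induction S rule: infinite_finite_induct) (auto intro: hom_add)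
lemma hom_mult: "hom i j p \<Longrightarrow> hom i' j' q \<Longrightarrow> hom (i + i') (j + j') (p * q)"
  unfolding hom_def by (auto simp: xdeg_add ydeg_add dest!: subsetD[OF keys_mult])
lemma hom_1: "hom 0 0 1"
  by (simp add: hom_def xdeg_def ydeg_def)
lemma hom_pconst: "hom 0 0 (pconst c)"
  by (simp add: hom_def xdeg_def ydeg_def pconst_def)
lemma hom_power: "hom i j p \<Longrightarrow> hom (n * i) (n * j) (p ^ n)"
  by (induction n) (simp_all add: hom_1 hom_mult)
lemma hom_pvar[simp]:
  "hom 1 0 (pvar X1)" "hom 1 0 (pvar X2)" "hom 0 1 (pvar Y1)" "hom 0 1 (pvar Y2)"
  by (simp_all add: hom_def pvar_def xdeg_def ydeg_def lookup_single)


lemma hom_subst: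
  assumes "hom 1 0 (\<sigma> X1)" "hom 1 0 (\<sigma> X2)" "hom 0 1 (\<sigma> Y1)" "hom 0 1 (\<sigma> Y2)"
    and "hom i j p"
  shows "hom i j (subst \<sigma> p)"
  unfolding subst_alt
proof (rule hom_sum)
  fix m assume m: "m \<in> Poly_Mapping.keys p"
  then have ij: "xdeg m = i" "ydeg m = j" using assms(5) by (auto simp: hom_def)
  have "hom (Poly_Mapping.lookup m X1 * 1 + Poly_Mapping.lookup m X2 * 1 + Poly_Mapping.lookup m Y1 * 0 + Poly_Mapping.lookup m Y2 * 0)
            (Poly_Mapping.lookup m X1 * 0 + Poly_Mapping.lookup m X2 * 0 + Poly_Mapping.lookup m Y1 * 1 + Poly_Mapping.lookup m Y2 * 1)
          (mon \<sigma> m)"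
    unfolding mon4 by (intro hom_mult hom_power assms(1-4))
  then have "hom i j (mon \<sigma> m)" using ij by (simp add: xdeg_def ydeg_def)
  then show "hom i j (pconst (Poly_Mapping.lookup p m) * mon \<sigma> m)"
    using hom_mult[OF hom_pconst] by fastforce
qed


definition zc :: "poly4 \<Rightarrow> bool" where "zc p \<longleftrightarrow> Poly_Mapping.lookup p 0 = 0"

lemma add_eq_0_mono: "(a + b = (0::var \<Rightarrow>\<^sub>0 nat)) \<longleftrightarrow> a = 0 \<and> b = 0"
  by (auto simp: poly_mapping_eq_iff fun_eq_iff lookup_add)

lemma zc_mult: "zc p \<Longrightarrow> zc (p * q)"
proof (rule ccontr)
  assume "zc p" "\<not> zc (p * q)"
  then have "0 \<in> Poly_Mapping.keys (p * q)" by (simp add: zc_def in_keys_iff)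
  then obtain a b where "0 = a + b" "a \<in> Poly_Mapping.keys p" using keys_mult[of p q] by blast
  then have "0 \<in> Poly_Mapping.keys p" by (metis add_eq_0_mono)
  then show False using \<open>zc p\<close> by (simp add: zc_def in_keys_iff)
qed
lemma zc_mult2: "zc q \<Longrightarrow> zc (p * q)"
  using zc_mult[of q p] by (simp add: mult.commute)
lemma zc_power: "zc p \<Longrightarrow> n > 0 \<Longrightarrow> zc (p ^ n)"
  by (cases n) (auto intro: zc_mult)
lemma zc_add: "zc p \<Longrightarrow> zc q \<Longrightarrow> zc (p + q)" by (simp add: zc_def lookup_add)
lemma zc_diff: "zc p \<Longrightarrow> zc q \<Longrightarrow> zc (p - q)" by (simp add: zc_def lookup_minus)
lemma zc_smult: "zc p \<Longrightarrow> zc (pconst c * p)" by (simp add: zc_def lookup_pconst_mult)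
lemma zc_pvar[simp]: "zc (pvar v)"
proof -
  have "Poly_Mapping.single v (1::nat) \<noteq> 0"
    by (metis lookup_single_eq lookup_zero one_neq_zero)
  then show ?thesis by (simp add: zc_def pvar_def lookup_single)
qed
lemma zc_0[simp]: "zc 0" by (simp add: zc_def)

lemma zc_mon: assumes "\<And>v. zc (\<sigma> v)" "m \<noteq> 0" shows "zc (mon \<sigma> m)"
proof -
  obtain v where v: "Poly_Mapping.lookup m v \<noteq> 0"
    using assms(2) by (metis poly_mapping_eqI lookup_zero)
  have "mon \<sigma> m = \<sigma> v ^ Poly_Mapping.lookup m v * (\<Prod>u\<in>UNIV - {v}. \<sigma> u ^ Poly_Mapping.lookup m u)"
    unfolding mon_UNIV by (rule prod.remove) auto
  then show ?thesis using v assms(1) by (simp add: zc_mult zc_power)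
qed

lemma const_subst: assumes "\<And>v. zc (\<sigma> v)"
  shows "Poly_Mapping.lookup (subst \<sigma> p) 0 = Poly_Mapping.lookup p 0"
proof -
  have "Poly_Mapping.lookup (subst \<sigma> p) 0 =
    (\<Sum>m\<in>insert 0 (Poly_Mapping.keys p). Poly_Mapping.lookup p m * Poly_Mapping.lookup (mon \<sigma> m) 0)"
  proof -
    have "subst \<sigma> p = (\<Sum>m\<in>insert 0 (Poly_Mapping.keys p). pconst (Poly_Mapping.lookup p m) * mon \<sigma> m)"
      by (rule subst_superset) auto
    then show ?thesis by (simp add: lookup_sum lookup_pconst_mult)
  qed
  also have "\<dots> = Poly_Mapping.lookup p 0 * Poly_Mapping.lookup (mon \<sigma> 0) 0"
    using zc_mon[OF assms] by (intro sum.mono_neutral_left[symmetric, where S = "{0}", simplified]) (auto simp: zc_def)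
  finally show ?thesis by simp
qed

lemma zc_subst: "(\<And>v. zc (\<sigma> v)) \<Longrightarrow> zc p \<Longrightarrow> zc (subst \<sigma> p)"
  by (simp add: zc_def const_subst)

definition dscale :: "(var \<Rightarrow> complex) \<Rightarrow> var \<Rightarrow> poly4" where
  "dscale lam v = pconst (lam v) * pvar v"

lemma mon_dscale: "mon (dscale lam) m = pconst (\<Prod>v\<in>UNIV. lam v ^ Poly_Mapping.lookup m v) * Poly_Mapping.single m 1"
proof -
  have "mon (dscale lam) m = (\<Prod>v\<in>UNIV. pconst (lam v ^ Poly_Mapping.lookup m v) * pvar v ^ Poly_Mapping.lookup m v)"
    by (simp add: mon_UNIV dscale_def power_mult_distrib pconst_power)
  also have "\<dots> = pconst (\<Prod>v\<in>UNIV. lam v ^ Poly_Mapping.lookup m v) * mon pvar m"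
    by (simp add: prod.distrib pconst_prod mon_UNIV)
  finally show ?thesis by (simp add: mon_pvar)
qed

lemma lookup_dscale:
  "Poly_Mapping.lookup (subst (dscale lam) p) m = (\<Prod>v\<in>UNIV. lam v ^ Poly_Mapping.lookup m v) * Poly_Mapping.lookup p m"
proof -
  have "Poly_Mapping.lookup (subst (dscale lam) p) m =
     (\<Sum>m'\<in>insert m (Poly_Mapping.keys p). Poly_Mapping.lookup p m' *
        ((\<Prod>v\<in>UNIV. lam v ^ Poly_Mapping.lookup m' v) * Poly_Mapping.lookup (Poly_Mapping.single m' 1) m))"
  proof -
    have "subst (dscale lam) p = (\<Sum>m'\<in>insert m (Poly_Mapping.keys p). pconst (Poly_Mapping.lookup p m') * mon (dscale lam) m')"
      by (rule subst_superset) auto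
    then show ?thesis by (simp add: lookup_sum lookup_pconst_mult mon_dscale)
  qed
  also have "\<dots> = Poly_Mapping.lookup p m * ((\<Prod>v\<in>UNIV. lam v ^ Poly_Mapping.lookup m v))"
    by (subst sum.remove[of _ m]) (auto simp: lookup_single intro!: sum.neutral)
  finally show ?thesis by (simp add: mult.commute)
qed

lemma cis_root_eq1:
  assumes "k > 0"
  shows "cis (2 * pi * of_int n / real k) = 1 \<longleftrightarrow> int k dvd n"
proof
  assume h: "cis (2 * pi * of_int n / real k) = 1"
  then have "cos (2 * pi * of_int n / real k) = 1"
    by (metis cis.sel(1) one_complex.sel(1))
  then obtain m :: int where m: "2 * pi * of_int n / real k = of_int m * 2 * pi"
    by (auto simp: cos_one_2pi_int)
  then have "of_int n = real_of_int (m * int k)" using assms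
    by (simp add: field_simps)
  then have "n = m * int k" by linarith
  then show "int k dvd n" by simp
next
  assume "int k dvd n"
  then obtain m where "n = int k * m" by blast
  then have "2 * pi * of_int n / real k = 2 * pi * of_int m" using assms by simp
  then show "cis (2 * pi * of_int n / real k) = 1" by simp
qed



definition lin :: "complex \<Rightarrow> complex \<Rightarrow> poly4" where
  "lin a b = pconst a * pvar X1 + pconst b * pvar X2"
definition linY :: "complex \<Rightarrow> complex \<Rightarrow> poly4" where
  "linY a b = pconst a * pvar Y1 + pconst b * pvar Y2"

lemma lin_add: "lin a b + lin a' b' = lin (a + a') (b + b')"
  by (simp add: lin_def pconst_add algebra_simps)
lemma linY_add: "linY a b + linY a' b' = linY (a + a') (b + b')"
  by (simp add: linY_def pconst_add algebra_simps)
lemma lin_smult: "pconst c * lin a b = lin (c * a) (c * b)"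
  by (simp add: lin_def pconst_mult[symmetric] algebra_simps)
lemma linY_smult: "pconst c * linY a b = linY (c * a) (c * b)"
  by (simp add: linY_def pconst_mult[symmetric] algebra_simps)
lemma subst_lin: "subst \<sigma> (lin a b) = pconst a * \<sigma> X1 + pconst b * \<sigma> X2"
  by (simp add: lin_def subst_add subst_mult)
lemma subst_linY: "subst \<sigma> (linY a b) = pconst a * \<sigma> Y1 + pconst b * \<sigma> Y2"
  by (simp add: linY_def subst_add subst_mult)
lemma lin_10: "lin 1 0 = pvar X1" by (simp add: lin_def)
lemma lin_01: "lin 0 1 = pvar X2" by (simp add: lin_def)
lemma linY_10: "linY 1 0 = pvar Y1" by (simp add: linY_def)
lemma linY_01: "linY 0 1 = pvar Y2" by (simp add: linY_def)
lemma lin_00: "lin 0 0 = 0" by (simp add: lin_def)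
lemma linY_00: "linY 0 0 = 0" by (simp add: linY_def)

lemma zc_lin: "zc (lin a b)" by (simp add: lin_def zc_add zc_smult)
lemma zc_linY: "zc (linY a b)" by (simp add: linY_def zc_add zc_smult)

definition asig :: "mat2 \<Rightarrow> var \<Rightarrow> poly4" where
  "asig w v = (case v of X1 \<Rightarrow> lin (w 0 0) (w 0 1) | X2 \<Rightarrow> lin (w 1 0) (w 1 1)
     | Y1 \<Rightarrow> linY (w 0 0) (w 0 1) | Y2 \<Rightarrow> linY (w 1 0) (w 1 1))"

lemma act_eq: "act w p = subst (asig w) p"
  unfolding act_def asig_def lin_def linY_def by simp

section \<open>Complex coordinates\<close>

definition zz :: poly4 where "zz = lin 1 \<i>"
definition zb :: poly4 where "zb = lin 1 (- \<i>)"
definition ww :: poly4 where "ww = linY 1 \<i>"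
definition wb :: poly4 where "wb = linY 1 (- \<i>)"

definition sigZ :: "var \<Rightarrow> poly4" where
  "sigZ v = (case v of X1 \<Rightarrow> zz | X2 \<Rightarrow> zb | Y1 \<Rightarrow> ww | Y2 \<Rightarrow> wb)"

definition Zmon :: "nat \<Rightarrow> nat \<Rightarrow> nat \<Rightarrow> nat \<Rightarrow> poly4" where
  "Zmon a b c d = zz ^ a * zb ^ b * ww ^ c * wb ^ d"

lemma mon_sigZ: "mon sigZ m = Zmon (Poly_Mapping.lookup m X1) (Poly_Mapping.lookup m X2)
    (Poly_Mapping.lookup m Y1) (Poly_Mapping.lookup m Y2)"
  by (simp add: mon4 sigZ_def Zmon_def)

lemma Zmon_add: "Zmon (a+a') (b+b') (c+c') (d+d') = Zmon a b c d * Zmon a' b' c' d'"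
  by (simp add: Zmon_def power_add algebra_simps)

lemma Zmon_0: "Zmon 0 0 0 0 = 1" by (simp add: Zmon_def)

lemma zc_Zmon: "a + b + c + d > 0 \<Longrightarrow> zc (Zmon a b c d)"
  unfolding Zmon_def zz_def zb_def ww_def wb_def
  by (cases "a > 0"; cases "b > 0"; cases "c > 0"; cases "d > 0")
     (auto intro: zc_mult zc_mult2 zc_power zc_lin zc_linY)

lemma hom_lin: "hom 1 0 (lin a b)" unfolding lin_def by (intro hom_add hom_smult hom_pvar)
lemma hom_linY: "hom 0 1 (linY a b)" unfolding linY_def by (intro hom_add hom_smult hom_pvar)

lemma hom_Zmon: "hom (a + b) (c + d) (Zmon a b c d)"
proof -
  have "hom (a*1 + b*1 + c*0 + d*0) (a*0 + b*0 + c*1 + d*1) (Zmon a b c d)"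
    unfolding Zmon_def zz_def zb_def ww_def wb_def
    by (intro hom_mult hom_power hom_lin hom_linY)
  then show ?thesis by simp
qed

lemma cis_eq: "cis t = complex_of_real (cos t) + \<i> * complex_of_real (sin t)"
  by (simp add: complex_eq_iff)

lemma subst_zz: "subst \<sigma> zz = \<sigma> X1 + pconst \<i> * \<sigma> X2"
  by (simp add: zz_def subst_lin)
lemma subst_zb: "subst \<sigma> zb = \<sigma> X1 - pconst \<i> * \<sigma> X2"
  by (simp add: zb_def subst_lin pconst_minus)
lemma subst_ww: "subst \<sigma> ww = \<sigma> Y1 + pconst \<i> * \<sigma> Y2"
  by (simp add: ww_def subst_linY)
lemma subst_wb: "subst \<sigma> wb = \<sigma> Y1 - pconst \<i> * \<sigma> Y2"
  by (simp add: wb_def subst_linY pconst_minus)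

lemma rot_entries:
  "rot k j 0 0 = complex_of_real (cos (2 * pi * real j / real k))"
  "rot k j 0 1 = - complex_of_real (sin (2 * pi * real j / real k))"
  "rot k j 1 0 = complex_of_real (sin (2 * pi * real j / real k))"
  "rot k j 1 1 = complex_of_real (cos (2 * pi * real j / real k))"
  by (simp_all add: rot_def Let_def)

lemma refl_entries:
  "refl k j 0 0 = complex_of_real (cos (2 * pi * real j / real k))"
  "refl k j 0 1 = complex_of_real (sin (2 * pi * real j / real k))"
  "refl k j 1 0 = complex_of_real (sin (2 * pi * real j / real k))"
  "refl k j 1 1 = - complex_of_real (cos (2 * pi * real j / real k))"
  by (simp_all add: refl_def Let_def)

lemma cs1: "complex_of_real (cos x) * complex_of_real (cos x) + complex_of_real (sin x) * complex_of_real (sin x) = 1"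
proof -
  have "complex_of_real (cos x * cos x + sin x * sin x) = 1"
    using sin_cos_squared_add[of x] by (simp only: power2_eq_square) simp
  then show ?thesis by (simp only: of_real_add of_real_mult)
qed

lemma det_rot: "det2 (rot k j) = 1"
  unfolding det2_def rot_entries using cs1 by (simp add: algebra_simps)

lemma det_refl: "det2 (refl k j) = -1"
  unfolding det2_def refl_entries using cs1 by (simp add: algebra_simps)

lemma lin_eqI: "a = a' \<Longrightarrow> b = b' \<Longrightarrow> lin a b = lin a' b'" by simp

lemma asig_gen:
  "subst (asig w) zz = lin (w 0 0 + \<i> * w 1 0) (w 0 1 + \<i> * w 1 1)"
  "subst (asig w) zb = lin (w 0 0 - \<i> * w 1 0) (w 0 1 - \<i> * w 1 1)"
  "subst (asig w) ww = linY (w 0 0 + \<i> * w 1 0) (w 0 1 + \<i> * w 1 1)"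
  "subst (asig w) wb = linY (w 0 0 - \<i> * w 1 0) (w 0 1 - \<i> * w 1 1)"
  unfolding zz_def zb_def ww_def wb_def subst_lin subst_linY
  by (simp_all add: asig_def lin_smult linY_smult lin_add linY_add algebra_simps)

lemma linY_eqI: "a = a' \<Longrightarrow> b = b' \<Longrightarrow> linY a b = linY a' b'" by simp

lemma rot_zz: "subst (asig (rot k j)) zz = pconst (cis ((2 * pi * real j / real k))) * zz"
  unfolding asig_gen unfolding rot_entries zz_def zb_def ww_def wb_def lin_smult linY_smult
  by (intro lin_eqI; simp add: cis_eq algebra_simps)

lemma rot_zb: "subst (asig (rot k j)) zb = pconst (cis (- (2 * pi * real j / real k))) * zb"
  unfolding asig_gen unfolding rot_entries zz_def zb_def ww_def wb_def lin_smult linY_smult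
  by (intro lin_eqI; simp add: cis_eq algebra_simps)

lemma rot_ww: "subst (asig (rot k j)) ww = pconst (cis ((2 * pi * real j / real k))) * ww"
  unfolding asig_gen unfolding rot_entries zz_def zb_def ww_def wb_def lin_smult linY_smult
  by (intro linY_eqI; simp add: cis_eq algebra_simps)

lemma rot_wb: "subst (asig (rot k j)) wb = pconst (cis (- (2 * pi * real j / real k))) * wb"
  unfolding asig_gen unfolding rot_entries zz_def zb_def ww_def wb_def lin_smult linY_smult
  by (intro linY_eqI; simp add: cis_eq algebra_simps)

lemma refl_zz: "subst (asig (refl k j)) zz = pconst (cis ((2 * pi * real j / real k))) * zb"
  unfolding asig_gen unfolding refl_entries zz_def zb_def ww_def wb_def lin_smult linY_smult
  by (intro lin_eqI; simp add: cis_eq algebra_simps)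

lemma refl_zb: "subst (asig (refl k j)) zb = pconst (cis (- (2 * pi * real j / real k))) * zz"
  unfolding asig_gen unfolding refl_entries zz_def zb_def ww_def wb_def lin_smult linY_smult
  by (intro lin_eqI; simp add: cis_eq algebra_simps)

lemma refl_ww: "subst (asig (refl k j)) ww = pconst (cis ((2 * pi * real j / real k))) * wb"
  unfolding asig_gen unfolding refl_entries zz_def zb_def ww_def wb_def lin_smult linY_smult
  by (intro linY_eqI; simp add: cis_eq algebra_simps)

lemma refl_wb: "subst (asig (refl k j)) wb = pconst (cis (- (2 * pi * real j / real k))) * ww"
  unfolding asig_gen unfolding refl_entries zz_def zb_def ww_def wb_def lin_smult linY_smult
  by (intro linY_eqI; simp add: cis_eq algebra_simps)


lemma pconst_pow4: "(pconst \<alpha> * x) ^ a * (pconst \<beta> * y) ^ b * (pconst \<gamma> * z) ^ c * (pconst \<delta> * u) ^ d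
   = pconst (\<alpha> ^ a * \<beta> ^ b * \<gamma> ^ c * \<delta> ^ d) * (x ^ a * y ^ b * z ^ c * u ^ d)"
  by (simp add: power_mult_distrib pconst_power pconst_mult[symmetric] mult_ac)

lemma cis_scal: "cis t ^ a * cis (-t) ^ b * cis t ^ c * cis (-t) ^ d =
   cis (t * of_int (int a - int b + int c - int d))"
  by (simp add: DeMoivre cis_mult algebra_simps)

lemma act_rot_Zmon: "act (rot k j) (Zmon a b c d) =
   pconst (cis (2 * pi * real j / real k * of_int (int a - int b + int c - int d))) * Zmon a b c d"
  unfolding act_eq Zmon_def subst_mult subst_power rot_zz rot_zb rot_ww rot_wb pconst_pow4 cis_scal ..

lemma act_refl_Zmon: "act (refl k j) (Zmon a b c d) =
   pconst (cis (2 * pi * real j / real k * of_int (int a - int b + int c - int d))) * Zmon b a d c"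
proof -
  have "act (refl k j) (Zmon a b c d) =
     pconst (cis (2 * pi * real j / real k * of_int (int a - int b + int c - int d))) * (zb ^ a * zz ^ b * wb ^ c * ww ^ d)"
    unfolding act_eq Zmon_def subst_mult subst_power refl_zz refl_zb refl_ww refl_wb pconst_pow4 cis_scal ..
  then show ?thesis by (simp add: Zmon_def mult_ac)
qed

lemma act_diff: "act w (p - q) = act w p - act w q"
  by (simp add: act_eq subst_diff)
lemma act_add: "act w (p + q) = act w p + act w q"
  by (simp add: act_eq subst_add)

lemma cis_weight_1:
  assumes "k > 0" "int k dvd n"
  shows "cis (2 * pi * real j / real k * of_int n) = 1"
proof -
  have eq: "2 * pi * real j / real k * of_int n = 2 * pi * of_int (int j * n) / real k" by simp
  have "int k dvd int j * n" using assms(2) by simp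
  then show ?thesis unfolding eq by (subst cis_root_eq1[OF assms(1)])
qed

lemma Zdiff_det:
  assumes k: "k > 0" and dv: "int k dvd (int a - int b + int c - int d)"
  shows "determinantal (dihedral k) (Zmon a b c d - Zmon b a d c)"
  unfolding determinantal_def
proof
  fix w assume "w \<in> dihedral k"
  then obtain j where w: "w = rot k j \<or> w = refl k j" by (auto simp: dihedral_def)
  have e: "int b - int a + int d - int c = - (int a - int b + int c - int d)" by simp
  have "int k dvd - (int a - int b + int c - int d)" using dv by (simp only: dvd_minus_iff)
  then have dv2: "int k dvd (int b - int a + int d - int c)" by (simp only: e)
  have c1: "cis (2 * pi * real j / real k * of_int (int a - int b + int c - int d)) = 1"
    by (rule cis_weight_1[OF k dv])
  have c2: "cis (2 * pi * real j / real k * of_int (int b - int a + int d - int c)) = 1"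
    by (rule cis_weight_1[OF k dv2])
  from w show "act w (Zmon a b c d - Zmon b a d c) = pconst (det2 w) * (Zmon a b c d - Zmon b a d c)"
  proof
    assume h: "w = rot k j"
    show ?thesis
      unfolding h act_diff act_rot_Zmon c1 c2 det_rot by simp
  next
    assume h: "w = refl k j"
    show ?thesis
      unfolding h act_diff act_refl_Zmon c1 c2 det_refl by (simp add: pconst_minus)
  qed
qed



lemma lin_diff: "lin a b - lin a' b' = lin (a - a') (b - b')"
  by (simp add: lin_def pconst_diff algebra_simps)
lemma linY_diff: "linY a b - linY a' b' = linY (a - a') (b - b')"
  by (simp add: linY_def pconst_diff algebra_simps)

definition tau :: "var \<Rightarrow> poly4" where
  "tau v = (case v of X1 \<Rightarrow> lin (1/2) (1/2) | X2 \<Rightarrow> lin (- \<i>/2) (\<i>/2)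
     | Y1 \<Rightarrow> linY (1/2) (1/2) | Y2 \<Rightarrow> linY (- \<i>/2) (\<i>/2))"

lemma sigZ_tau_v: "subst sigZ (tau v) = pvar v"
  by (cases v) (simp_all add: tau_def subst_lin subst_linY sigZ_def zz_def zb_def ww_def wb_def
      lin_smult linY_smult lin_add linY_add lin_10 lin_01 linY_10 linY_01
      flip: lin_10 lin_01 linY_10 linY_01)

lemma tau_sigZ_v: "subst tau (sigZ v) = pvar v"
  by (cases v) (simp_all add: tau_def subst_zz subst_zb subst_ww subst_wb sigZ_def
      lin_smult linY_smult lin_add linY_add lin_diff linY_diff algebra_simps
      flip: lin_10 lin_01 linY_10 linY_01)

lemma sigZ_tau: "subst sigZ (subst tau p) = p"
  by (simp add: subst_comp sigZ_tau_v subst_id)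

lemma tau_sigZ: "subst tau (subst sigZ p) = p"
  by (simp add: subst_comp tau_sigZ_v subst_id)


section \<open>Evaluation maps\<close>

definition evs :: "complex \<Rightarrow> var \<Rightarrow> poly4" where
  "evs e v = (case v of X1 \<Rightarrow> lin 1 0 | X2 \<Rightarrow> lin \<i> 0 | Y1 \<Rightarrow> linY 1 0 | Y2 \<Rightarrow> linY e 0)"

definition lamE :: "complex \<Rightarrow> complex \<Rightarrow> var \<Rightarrow> complex" where
  "lamE zx zy v = (case v of X1 \<Rightarrow> zx | X2 \<Rightarrow> zx | Y1 \<Rightarrow> zy | Y2 \<Rightarrow> zy)"

lemma subst_dscale_lin0: "subst (dscale lam) (lin a 0) = lin (a * lam X1) 0"
  unfolding subst_lin by (simp add: subst_lin dscale_def lin_def pconst_mult[symmetric] mult_ac)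
lemma subst_dscale_linY0: "subst (dscale lam) (linY a 0) = linY (a * lam Y1) 0"
  unfolding subst_linY by (simp add: subst_linY dscale_def linY_def pconst_mult[symmetric] mult_ac)

lemma ev_asig_rot:
  assumes "e = \<i> \<and> zy = cis (- (2 * pi * real j / real k)) \<or> e = - \<i> \<and> zy = cis (2 * pi * real j / real k)"
  shows "subst (evs e) (asig (rot k j) v) = subst (dscale (lamE (cis (- (2 * pi * real j / real k))) zy)) (evs e v)"
proof -
  have h1: "subst (evs e) (asig (rot k j) v) = (case v of
      X1 \<Rightarrow> lin (rot k j 0 0 + rot k j 0 1 * \<i>) 0 | X2 \<Rightarrow> lin (rot k j 1 0 + rot k j 1 1 * \<i>) 0
    | Y1 \<Rightarrow> linY (rot k j 0 0 + rot k j 0 1 * e) 0 | Y2 \<Rightarrow> linY (rot k j 1 0 + rot k j 1 1 * e) 0)"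
    by (cases v) (simp_all add: asig_def subst_lin subst_linY evs_def lin_smult linY_smult lin_add linY_add)
  have h2: "subst (dscale (lamE (cis (- (2 * pi * real j / real k))) zy)) (evs e v) = (case v of
      X1 \<Rightarrow> lin (cis (- (2 * pi * real j / real k))) 0 | X2 \<Rightarrow> lin (\<i> * cis (- (2 * pi * real j / real k))) 0
    | Y1 \<Rightarrow> linY zy 0 | Y2 \<Rightarrow> linY (e * zy) 0)"
    by (cases v) (simp_all add: evs_def subst_dscale_lin0 subst_dscale_linY0 lamE_def)
  from assms consider (a) "e = \<i>" "zy = cis (- (2 * pi * real j / real k))"
    | (b) "e = - \<i>" "zy = cis (2 * pi * real j / real k)" by blast
  then show ?thesis
  proof cases
    case a
    show ?thesis unfolding h1 h2
      unfolding a rot_entries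
      by (cases v) (auto simp: cis_eq algebra_simps intro!: lin_eqI linY_eqI)
  next
    case b
    show ?thesis unfolding h1 h2
      unfolding b rot_entries
      by (cases v) (auto simp: cis_eq algebra_simps intro!: lin_eqI linY_eqI)
  qed
qed

lemma ev_act_rot:
  assumes "e = \<i> \<and> zy = cis (- (2 * pi * real j / real k)) \<or> e = - \<i> \<and> zy = cis (2 * pi * real j / real k)"
  shows "subst (evs e) (act (rot k j) p) = subst (dscale (lamE (cis (- (2 * pi * real j / real k))) zy)) (subst (evs e) p)"
  unfolding act_eq subst_comp ev_asig_rot[OF assms] ..

lemma zc_evs: "zc (evs e v)"
  by (cases v) (simp_all add: evs_def zc_lin zc_linY)

lemma zc_asig: "zc (asig w v)"
  by (cases v) (simp_all add: asig_def zc_lin zc_linY)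

lemma hom_evs: "hom 1 0 (evs e X1)" "hom 1 0 (evs e X2)" "hom 0 1 (evs e Y1)" "hom 0 1 (evs e Y2)"
  by (simp_all only: evs_def var.case hom_lin hom_linY)

lemma prod_lamE: "(\<Prod>v\<in>UNIV. lamE zx zy v ^ Poly_Mapping.lookup m v) =
   zx ^ (Poly_Mapping.lookup m X1 + Poly_Mapping.lookup m X2) * zy ^ (Poly_Mapping.lookup m Y1 + Poly_Mapping.lookup m Y2)"
  by (simp add: UNIV_var lamE_def power_add)



interpretation RM: module "(*) :: poly4 \<Rightarrow> poly4 \<Rightarrow> poly4"
  by standard (simp_all add: distrib_left distrib_right mult.assoc)

interpretation VS: vector_space "\<lambda>c (p::poly4). pconst c * p"
  by standard (simp_all add: distrib_left distrib_right pconst_add mult.assoc[symmetric] pconst_mult)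

lemma act_smult: "act w (pconst c * p) = pconst c * act w p"
  by (simp add: act_eq subst_mult)
lemma act_zero: "act w 0 = 0" by (simp add: act_eq)

lemma det_add: "determinantal W p \<Longrightarrow> determinantal W q \<Longrightarrow> determinantal W (p + q)"
  by (simp add: determinantal_def act_add algebra_simps)
lemma det_smult: "determinantal W p \<Longrightarrow> determinantal W (pconst c * p)"
  by (simp add: determinantal_def act_smult mult.left_commute)
lemma det_0: "determinantal W 0"
  by (simp add: determinantal_def act_zero)

lemma refl0_in: "0 < k \<Longrightarrow> refl k 0 \<in> dihedral k"
  by (auto simp: dihedral_def)
lemma rot1_in: "1 < k \<Longrightarrow> rot k 1 \<in> dihedral k"
  by (auto simp: dihedral_def)

lemma const_act: "Poly_Mapping.lookup (act w p) 0 = Poly_Mapping.lookup p 0"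
  unfolding act_eq by (rule const_subst) (rule zc_asig)

lemma det_zc: assumes "0 < k" "determinantal (dihedral k) d" shows "zc d"
proof -
  have "act (refl k 0) d = pconst (-1) * d"
    using assms refl0_in[OF assms(1)] by (simp add: determinantal_def det_refl)
  then have "Poly_Mapping.lookup d 0 = - Poly_Mapping.lookup d 0"
    using const_act[of "refl k 0" d] by (simp add: lookup_pconst_mult)
  then show ?thesis by (simp add: zc_def)
qed

lemma ideal_pow_1: "ideal_pow (RM.span S) 1 = RM.span S"
proof -
  have "RM.span {a * b |a b. a \<in> UNIV \<and> b \<in> RM.span S} = RM.span S"
  proof (rule RM.span_subspace)
    show "{a * b |a b. a \<in> UNIV \<and> b \<in> RM.span S} \<subseteq> RM.span S"
      by (auto intro: RM.span_scale)
    show "RM.span S \<subseteq> RM.span {a * b |a b. a \<in> UNIV \<and> b \<in> RM.span S}"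
    proof
      fix x assume "x \<in> RM.span S"
      then have "x \<in> {a * b |a b. a \<in> UNIV \<and> b \<in> RM.span S}" by (intro CollectI exI[of _ 1] exI[of _ x]) simp
      then show "x \<in> RM.span {a * b |a b. a \<in> UNIV \<and> b \<in> RM.span S}" by (rule RM.span_base)
    qed
    show "RM.subspace (RM.span S)" by (rule RM.subspace_span)
  qed
  then show ?thesis by (simp add: ideal_gen_def)
qed

abbreviation DD :: "nat \<Rightarrow> poly4 set" where "DD k \<equiv> {p. determinantal (dihedral k) p}"
abbreviation AA :: "nat \<Rightarrow> poly4 set" where "AA k \<equiv> detideal (dihedral k)"
abbreviation MM :: "nat \<Rightarrow> poly4 set" where "MM k \<equiv> max_times (AA k)"

lemma AA_eq: "AA k = RM.span (DD k)" by (simp add: detideal_def ideal_gen_def)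
lemma pow1_AA: "ideal_pow (AA k) 1 = AA k" unfolding AA_eq by (rule ideal_pow_1)
lemma MM_eq: "MM k = RM.span {f * a | f a. zc f \<and> a \<in> AA k}"
  by (simp add: max_times_def ideal_gen_def zc_def)

lemma D_in_A: "d \<in> DD k \<Longrightarrow> d \<in> AA k"
  unfolding AA_eq by (rule RM.span_base)

lemma M_in_A: "x \<in> MM k \<Longrightarrow> x \<in> AA k"
  unfolding MM_eq
  by (rule subsetD[OF RM.span_minimal]) (auto simp: AA_eq intro: RM.span_scale RM.subspace_span)

lemma in_M: "zc f \<Longrightarrow> a \<in> AA k \<Longrightarrow> f * a \<in> MM k"
  unfolding MM_eq by (rule RM.span_base) auto

lemma M_add: "x \<in> MM k \<Longrightarrow> y \<in> MM k \<Longrightarrow> x + y \<in> MM k"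
  unfolding MM_eq by (rule RM.span_add)
lemma M_mult: "x \<in> MM k \<Longrightarrow> c * x \<in> MM k"
  unfolding MM_eq by (rule RM.span_scale)
lemma M_0: "0 \<in> MM k"
  unfolding MM_eq by (rule RM.span_zero)
lemma A_mult: "x \<in> AA k \<Longrightarrow> c * x \<in> AA k"
  unfolding AA_eq by (rule RM.span_scale)
lemma A_add: "x \<in> AA k \<Longrightarrow> y \<in> AA k \<Longrightarrow> x + y \<in> AA k"
  unfolding AA_eq by (rule RM.span_add)

section \<open>Degree bounds via evaluation\<close>

definition good :: "nat \<Rightarrow> poly4 \<Rightarrow> bool" where
  "good N q \<longleftrightarrow> (\<forall>m\<in>Poly_Mapping.keys q. N \<le> tdeg m)"

lemma good_0: "good N 0" by (simp add: good_def)
lemma good_add: "good N p \<Longrightarrow> good N q \<Longrightarrow> good N (p + q)"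
  unfolding good_def by (auto dest!: subsetD[OF keys_add])
lemma good_mult: "good N p \<Longrightarrow> good N (q * p)"
  unfolding good_def by (auto simp: tdeg_add dest!: subsetD[OF keys_mult])
lemma good_mult_zc: assumes "zc q" "good N p" shows "good (Suc N) (q * p)"
  unfolding good_def
proof
  fix m assume "m \<in> Poly_Mapping.keys (q * p)"
  then obtain a b where m: "m = a + b" "a \<in> Poly_Mapping.keys q" "b \<in> Poly_Mapping.keys p"
    using keys_mult by blast
  have "a \<noteq> 0" using m(2) assms(1) by (auto simp: zc_def in_keys_iff)
  then have "tdeg a > 0" using tdeg_0_iff by (metis neq0_conv)
  moreover have "N \<le> tdeg b" using m(3) assms(2) by (auto simp: good_def)
  ultimately show "Suc N \<le> tdeg m" by (simp add: m(1) tdeg_add)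
qed

lemma good_lookup: "good N q \<Longrightarrow> tdeg t < N \<Longrightarrow> Poly_Mapping.lookup q t = 0"
  unfolding good_def by (meson in_keys_iff not_le)

lemma scal_fix:
  assumes "subst (dscale lam) q = q" "m \<in> Poly_Mapping.keys q"
  shows "(\<Prod>v\<in>UNIV. lam v ^ Poly_Mapping.lookup m v) = 1"
proof -
  have "Poly_Mapping.lookup q m = (\<Prod>v\<in>UNIV. lam v ^ Poly_Mapping.lookup m v) * Poly_Mapping.lookup q m"
    using lookup_dscale[of lam q m] assms(1) by simp
  moreover have "Poly_Mapping.lookup q m \<noteq> 0" using assms(2) by (simp add: in_keys_iff)
  ultimately show ?thesis by simp
qed

lemma ev_D_good_i:
  assumes k: "2 \<le> k" and d: "d \<in> DD k"
  shows "good k (subst (evs \<i>) d)"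
  unfolding good_def
proof
  let ?q = "subst (evs \<i>) d"
  let ?t = "2 * pi * real 1 / real k"
  fix m assume m: "m \<in> Poly_Mapping.keys ?q"
  have "act (rot k 1) d = d"
    using d rot1_in[of k] k by (simp add: determinantal_def det_rot)
  then have "subst (dscale (lamE (cis (- ?t)) (cis (- ?t)))) ?q = ?q"
    using ev_act_rot[of "\<i>" "cis (- ?t)" 1 k d] by simp
  from scal_fix[OF this m]
  have "cis (- ?t) ^ (Poly_Mapping.lookup m X1 + Poly_Mapping.lookup m X2) *
        cis (- ?t) ^ (Poly_Mapping.lookup m Y1 + Poly_Mapping.lookup m Y2) = 1"
    unfolding prod_lamE .
  then have "cis (- ?t) ^ tdeg m = 1" by (simp add: tdeg_def power_add[symmetric] add.assoc)
  then have c1: "cis (real (tdeg m) * - ?t) = 1" by (simp only: DeMoivre)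
  have eq: "real (tdeg m) * - ?t = 2 * pi * of_int (- int (tdeg m)) / real k" by simp
  have c2: "cis (2 * pi * of_int (- int (tdeg m)) / real k) = 1" using c1 unfolding eq .
  have kpos: "0 < k" using k by simp
  have "int k dvd - int (tdeg m)" using iffD1[OF cis_root_eq1[OF kpos] c2] .
  then have dv: "k dvd tdeg m" by simp
  have "Poly_Mapping.lookup ?q 0 = 0"
    using const_subst[of "evs \<i>" d, OF zc_evs] det_zc[of k d] d k by (simp add: zc_def)
  then have "m \<noteq> 0" using m by (auto simp: in_keys_iff)
  then have "tdeg m \<noteq> 0" by (simp add: tdeg_0_iff)
  then show "k \<le> tdeg m" using dv by (simp add: dvd_imp_le)
qed


lemma ev_D_good_mi:
  assumes k: "2 \<le> k" and d: "d \<in> DD k"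
  shows "good 2 (subst (evs (- \<i>)) d)"
  unfolding good_def
proof
  let ?q = "subst (evs (- \<i>)) d"
  let ?t = "2 * pi * real 1 / real k"
  fix m assume m: "m \<in> Poly_Mapping.keys ?q"
  define X where "X = Poly_Mapping.lookup m X1 + Poly_Mapping.lookup m X2"
  define Y where "Y = Poly_Mapping.lookup m Y1 + Poly_Mapping.lookup m Y2"
  have "act (rot k 1) d = d"
    using d rot1_in[of k] k by (simp add: determinantal_def det_rot)
  then have "subst (dscale (lamE (cis (- ?t)) (cis ?t))) ?q = ?q"
    using ev_act_rot[of "- \<i>" "cis ?t" 1 k d] by simp
  from scal_fix[OF this m]
  have "cis (- ?t) ^ X * cis ?t ^ Y = 1"
    unfolding prod_lamE X_def Y_def .
  then have c1: "cis (real X * - ?t + real Y * ?t) = 1" by (simp only: DeMoivre cis_mult)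
  have eq: "real X * - ?t + real Y * ?t = 2 * pi * of_int (int Y - int X) / real k"
    by (simp add: diff_divide_distrib algebra_simps)
  have c2: "cis (2 * pi * of_int (int Y - int X) / real k) = 1" using c1 unfolding eq .
  have kpos: "0 < k" using k by simp
  have dv: "int k dvd int Y - int X" using iffD1[OF cis_root_eq1[OF kpos] c2] .
  have "Poly_Mapping.lookup ?q 0 = 0"
    using const_subst[of "evs (- \<i>)" d, OF zc_evs] det_zc[of k d] d k by (simp add: zc_def)
  then have "m \<noteq> 0" using m by (auto simp: in_keys_iff)
  then have "tdeg m \<noteq> 0" by (simp add: tdeg_0_iff)
  moreover have "tdeg m \<noteq> 1"
  proof
    assume "tdeg m = 1"
    then have "X + Y = 1" by (simp add: tdeg_def X_def Y_def)
    then have "X = 0 \<and> Y = 1 \<or> X = 1 \<and> Y = 0" by arith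
    then have "int k dvd 1" using dv by (elim disjE) simp_all
    then show False using k by simp
  qed
  ultimately show "2 \<le> tdeg m" by simp
qed

lemma ev_A_good:
  assumes hD: "\<And>d. d \<in> DD k \<Longrightarrow> good N (subst (evs e) d)" and a: "a \<in> AA k"
  shows "good N (subst (evs e) a)"
  using a unfolding AA_eq
proof (induction rule: RM.span_induct_alt)
  case base then show ?case by (simp add: good_0)
next
  case (step c x y)
  then show ?case by (simp add: subst_add subst_mult good_add good_mult hD)
qed

lemma ev_M_good:
  assumes hD: "\<And>d. d \<in> DD k \<Longrightarrow> good N (subst (evs e) d)" and x: "x \<in> MM k"
  shows "good (Suc N) (subst (evs e) x)"
  using x unfolding MM_eq
proof (induction rule: RM.span_induct_alt)
  case base then show ?case by (simp add: good_0)
next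
  case (step c z y)
  from step(1) obtain f a where fa: "z = f * a" "zc f" "a \<in> AA k" by blast
  have h1: "zc (subst (evs e) c * subst (evs e) f)"
    by (rule zc_mult2, rule zc_subst[OF zc_evs fa(2)])
  have h2: "good N (subst (evs e) a)" by (rule ev_A_good[OF hD fa(3)])
  have h3: "good (Suc N) (subst (evs e) c * subst (evs e) f * subst (evs e) a)"
    using h1 h2 by (rule good_mult_zc)
  have h4: "subst (evs e) (c * z + y) =
      subst (evs e) c * subst (evs e) f * subst (evs e) a + subst (evs e) y"
    unfolding fa(1) subst_add subst_mult by (simp only: mult.assoc)
  show ?case unfolding h4 by (rule good_add[OF h3 step(2)])
qed



lemma lin20: "lin 2 0 = pconst 2 * pvar X1" by (simp add: lin_def)
lemma linY20: "linY 2 0 = pconst 2 * pvar Y1" by (simp add: linY_def)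

lemma evi_z:
  "subst (evs \<i>) zz = 0" "subst (evs \<i>) zb = lin 2 0"
  "subst (evs \<i>) ww = 0" "subst (evs \<i>) wb = linY 2 0"
  unfolding subst_zz subst_zb subst_ww subst_wb
  by (simp_all add: evs_def lin_smult linY_smult lin_add linY_add lin_diff linY_diff lin_00 linY_00)

lemma evmi_z:
  "subst (evs (- \<i>)) zz = 0" "subst (evs (- \<i>)) zb = lin 2 0"
  "subst (evs (- \<i>)) ww = linY 2 0" "subst (evs (- \<i>)) wb = 0"
  unfolding subst_zz subst_zb subst_ww subst_wb
  by (simp_all add: evs_def lin_smult linY_smult lin_add linY_add lin_diff linY_diff lin_00 linY_00)

lemma two_mon: "(pconst 2 * pvar X1) ^ b * (pconst 2 * pvar Y1) ^ d =
   pconst (2 ^ (b + d)) * Poly_Mapping.single (mnm b 0 d 0) 1"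
proof -
  have 1: "(pconst 2 * pvar X1) ^ b * (pconst 2 * pvar Y1) ^ d =
     (pconst 2 ^ b * pconst 2 ^ d) * (pvar X1 ^ b * pvar Y1 ^ d)"
    by (simp only: power_mult_distrib mult_ac)
  have 2: "pconst 2 ^ b * pconst 2 ^ d = pconst (2 ^ (b + d))"
    by (simp only: pconst_power power_add pconst_mult[symmetric])
  have 3: "pvar X1 ^ b * pvar Y1 ^ d = Poly_Mapping.single (mnm b 0 d 0) 1"
    by (simp add: pvar_power mult_single mnm_def)
  show ?thesis unfolding 1 2 3 ..
qed

lemma phi_Zmon: "Poly_Mapping.lookup (subst (evs \<i>) (Zmon a b c d)) (mnm b' 0 d' 0) =
   (if a = 0 \<and> c = 0 \<and> b = b' \<and> d = d' then 2 ^ (b + d) else 0)"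
proof -
  have eq: "subst (evs \<i>) (Zmon a b c d) = 0 ^ a * 0 ^ c * ((pconst 2 * pvar X1) ^ b * (pconst 2 * pvar Y1) ^ d)"
    unfolding Zmon_def subst_mult subst_power evi_z lin20 linY20 by (simp only: mult_ac)
  show ?thesis
  proof (cases "a = 0 \<and> c = 0")
    case True
    then show ?thesis unfolding eq two_mon by (simp add: lookup_pconst_mult lookup_single when_def)
  next
    case False
    then have "(0::poly4) ^ a * 0 ^ c = 0" by (cases a; cases c) simp_all
    then show ?thesis unfolding eq using False by auto
  qed
qed

lemma psi_Zmon: "Poly_Mapping.lookup (subst (evs (- \<i>)) (Zmon a b c d)) (mnm b' 0 c' 0) =
   (if a = 0 \<and> d = 0 \<and> b = b' \<and> c = c' then 2 ^ (b + c) else 0)"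
proof -
  have eq: "subst (evs (- \<i>)) (Zmon a b c d) = 0 ^ a * 0 ^ d * ((pconst 2 * pvar X1) ^ b * (pconst 2 * pvar Y1) ^ c)"
    unfolding Zmon_def subst_mult subst_power evmi_z lin20 linY20 by (simp only: mult_ac)
  show ?thesis
  proof (cases "a = 0 \<and> d = 0")
    case True
    then show ?thesis unfolding eq two_mon by (simp add: lookup_pconst_mult lookup_single when_def)
  next
    case False
    then have "(0::poly4) ^ a * 0 ^ d = 0" by (cases a; cases d) simp_all
    then show ?thesis unfolding eq using False by auto
  qed
qed

definition Dl :: poly4 where "Dl = Zmon 1 0 0 1 - Zmon 0 1 1 0"
definition gg :: "nat \<Rightarrow> nat \<Rightarrow> poly4" where "gg k a = Zmon a 0 (k - a) 0 - Zmon 0 a 0 (k - a)"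

definition phi :: "nat \<Rightarrow> nat \<Rightarrow> poly4 \<Rightarrow> complex" where
  "phi k b p = Poly_Mapping.lookup (subst (evs \<i>) p) (mnm b 0 (k - b) 0)"
definition psi :: "poly4 \<Rightarrow> complex" where
  "psi p = Poly_Mapping.lookup (subst (evs (- \<i>)) p) (mnm 1 0 1 0)"

lemma phi_add: "phi k b (p + q) = phi k b p + phi k b q"
  by (simp add: phi_def subst_add lookup_add)
lemma phi_smult: "phi k b (pconst c * p) = c * phi k b p"
  by (simp add: phi_def subst_mult lookup_pconst_mult)
lemma phi_diff: "phi k b (p - q) = phi k b p - phi k b q"
  by (simp add: phi_def subst_diff lookup_minus)
lemma phi_sum: "phi k b (sum f S) = (\<Sum>x\<in>S. phi k b (f x))"
  by (simp add: phi_def subst_sum lookup_sum)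
lemma psi_add: "psi (p + q) = psi p + psi q"
  by (simp add: psi_def subst_add lookup_add)
lemma psi_smult: "psi (pconst c * p) = c * psi p"
  by (simp add: psi_def subst_mult lookup_pconst_mult)
lemma psi_diff: "psi (p - q) = psi p - psi q"
  by (simp add: psi_def subst_diff lookup_minus)
lemma psi_sum: "psi (sum f S) = (\<Sum>x\<in>S. psi (f x))"
  by (simp add: psi_def subst_sum lookup_sum)

lemma phi_Dl: "phi k b Dl = 0"
  by (simp add: phi_def Dl_def subst_diff lookup_minus phi_Zmon)
lemma psi_Dl: "psi Dl = -4"
  by (simp add: psi_def Dl_def subst_diff lookup_minus psi_Zmon)
lemma phi_gg: "0 < k \<Longrightarrow> a \<le> k \<Longrightarrow> b \<le> k \<Longrightarrow> phi k b (gg k a) = (if a = b then - (2 ^ k) else 0)"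
  by (auto simp: phi_def gg_def subst_diff lookup_minus phi_Zmon)
lemma psi_gg: "psi (gg k a) = 0"
  by (simp add: psi_def gg_def subst_diff lookup_minus psi_Zmon)

lemma phi_hom: assumes "hom i j p" "(i, j) \<noteq> (b, k - b)" shows "phi k b p = 0"
proof -
  have "hom i j (subst (evs \<i>) p)" by (rule hom_subst[OF hom_evs assms(1)])
  show ?thesis unfolding phi_def
  proof (rule ccontr)
    assume "Poly_Mapping.lookup (subst (evs \<i>) p) (mnm b 0 (k - b) 0) \<noteq> 0"
    then have "mnm b 0 (k - b) 0 \<in> Poly_Mapping.keys (subst (evs \<i>) p)" by (simp add: in_keys_iff)
    with \<open>hom i j (subst (evs \<i>) p)\<close> have "xdeg (mnm b 0 (k - b) 0) = i \<and> ydeg (mnm b 0 (k - b) 0) = j"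
      by (auto simp: hom_def)
    then show False using assms(2) by (auto simp: xdeg_def ydeg_def)
  qed
qed
lemma psi_hom: assumes "hom i j p" "(i, j) \<noteq> (1, 1)" shows "psi p = 0"
proof -
  have "hom i j (subst (evs (- \<i>)) p)" by (rule hom_subst[OF hom_evs assms(1)])
  show ?thesis unfolding psi_def
  proof (rule ccontr)
    assume "Poly_Mapping.lookup (subst (evs (- \<i>)) p) (mnm 1 0 1 0) \<noteq> 0"
    then have "mnm 1 0 1 0 \<in> Poly_Mapping.keys (subst (evs (- \<i>)) p)" by (simp add: in_keys_iff)
    with \<open>hom i j (subst (evs (- \<i>)) p)\<close> have "xdeg (mnm 1 0 1 0) = i \<and> ydeg (mnm 1 0 1 0) = j"
      by (auto simp: hom_def)
    then show False using assms(2) by (auto simp: xdeg_def ydeg_def)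
  qed
qed

lemma phi_M: assumes "2 \<le> k" "x \<in> MM k" "b \<le> k" shows "phi k b x = 0"
proof -
  have "good (Suc k) (subst (evs \<i>) x)"
    by (rule ev_M_good[OF ev_D_good_i[OF assms(1)] assms(2)])
  then show ?thesis unfolding phi_def by (rule good_lookup) (use assms(3) in \<open>simp add: tdeg_def\<close>)
qed

lemma psi_M: assumes "2 \<le> k" "x \<in> MM k" shows "psi x = 0"
proof -
  have "good (Suc 2) (subst (evs (- \<i>)) x)"
    by (rule ev_M_good[OF ev_D_good_mi[OF assms(1)] assms(2)])
  then show ?thesis unfolding psi_def by (rule good_lookup) (simp add: tdeg_def)
qed



definition MG :: "nat \<Rightarrow> poly4 set" where
  "MG k = {x + pconst e * Dl + (\<Sum>a\<le>k. pconst (c a) * gg k a) | x e c. x \<in> MM k}"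

lemma MG_I: "x \<in> MM k \<Longrightarrow> p = x + pconst e * Dl + (\<Sum>a\<le>k. pconst (c a) * gg k a) \<Longrightarrow> p \<in> MG k"
  unfolding MG_def by auto

lemma MG_E: "p \<in> MG k \<Longrightarrow> (\<And>x e c. x \<in> MM k \<Longrightarrow> p = x + pconst e * Dl + (\<Sum>a\<le>k. pconst (c a) * gg k a) \<Longrightarrow> thesis) \<Longrightarrow> thesis"
  unfolding MG_def by auto

lemma MG_add: assumes "p \<in> MG k" "q \<in> MG k" shows "p + q \<in> MG k"
proof -
  obtain x1 e1 c1 where 1: "x1 \<in> MM k" "p = x1 + pconst e1 * Dl + (\<Sum>a\<le>k. pconst (c1 a) * gg k a)"
    using assms(1) by (rule MG_E)
  obtain x2 e2 c2 where 2: "x2 \<in> MM k" "q = x2 + pconst e2 * Dl + (\<Sum>a\<le>k. pconst (c2 a) * gg k a)"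
    using assms(2) by (rule MG_E)
  have a: "pconst (e1 + e2) * Dl = pconst e1 * Dl + pconst e2 * Dl" by (simp only: pconst_add distrib_right)
  have b: "(\<Sum>a\<le>k. pconst (c1 a + c2 a) * gg k a) = (\<Sum>a\<le>k. pconst (c1 a) * gg k a) + (\<Sum>a\<le>k. pconst (c2 a) * gg k a)"
    by (simp only: pconst_add distrib_right sum.distrib)
  have "p + q = (x1 + x2) + pconst (e1 + e2) * Dl + (\<Sum>a\<le>k. pconst (c1 a + c2 a) * gg k a)"
    unfolding 1(2) 2(2) a b by (simp only: add_ac)
  then show ?thesis using M_add[OF 1(1) 2(1)] by (intro MG_I)
qed

lemma MG_smult: assumes "p \<in> MG k" shows "pconst s * p \<in> MG k"
proof -
  obtain x1 e1 c1 where 1: "x1 \<in> MM k" "p = x1 + pconst e1 * Dl + (\<Sum>a\<le>k. pconst (c1 a) * gg k a)"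
    using assms(1) by (rule MG_E)
  have "pconst s * p = (pconst s * x1) + pconst (s * e1) * Dl + (\<Sum>a\<le>k. pconst (s * c1 a) * gg k a)"
    unfolding 1(2) by (simp only: pconst_mult[symmetric] distrib_left sum_distrib_left mult.assoc)
  then show ?thesis using M_mult[OF 1(1)] by (intro MG_I)
qed

lemma MG_M: "x \<in> MM k \<Longrightarrow> x \<in> MG k"
  by (rule MG_I[where e = 0 and c = "\<lambda>_. 0"]) simp_all

lemma MG_Dl: "Dl \<in> MG k"
  by (rule MG_I[OF M_0, where e = 1 and c = "\<lambda>_. 0"]) simp

lemma MG_gg: assumes "a0 \<le> k" shows "gg k a0 \<in> MG k"
proof -
  have "(\<Sum>a\<le>k. pconst (if a = a0 then 1 else 0) * gg k a) = (\<Sum>a\<le>k. if a = a0 then gg k a else 0)"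
    by (rule sum.cong) auto
  also have "\<dots> = gg k a0" using assms by (simp add: sum.delta)
  finally show ?thesis
    by (intro MG_I[OF M_0, where e = 0 and c = "\<lambda>a. if a = a0 then 1 else 0"]) simp
qed

lemma MG_0: "0 \<in> MG k" by (rule MG_M[OF M_0])

lemma MG_neg: "p \<in> MG k \<Longrightarrow> - p \<in> MG k"
  using MG_smult[of p k "-1"] by (simp add: pconst_minus)

lemma MG_sum: "(\<And>x. x \<in> S \<Longrightarrow> f x \<in> MG k) \<Longrightarrow> sum f S \<in> MG k"
  by (induction S rule: infinite_finite_induct) (auto intro: MG_add MG_0)



lemma split_M:
  assumes k: "0 < k" and d1: "int k dvd (int a1 - int b1 + int c1 - int d1)"
    and d2: "int k dvd (int a2 - int b2 + int c2 - int d2)"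
    and s1: "0 < a1 + b1 + c1 + d1" and s2: "0 < a2 + b2 + c2 + d2"
  shows "Zmon (a1+a2) (b1+b2) (c1+c2) (d1+d2) - Zmon (b1+b2) (a1+a2) (d1+d2) (c1+c2) \<in> MG k"
proof -
  let ?Q = "Zmon a1 b1 c1 d1" and ?Qb = "Zmon b1 a1 d1 c1" and ?E = "Zmon a2 b2 c2 d2" and ?Eb = "Zmon b2 a2 d2 c2"
  have eq: "Zmon (a1+a2) (b1+b2) (c1+c2) (d1+d2) - Zmon (b1+b2) (a1+a2) (d1+d2) (c1+c2)
      = ?Q * (?E - ?Eb) + ?Eb * (?Q - ?Qb)"
    unfolding Zmon_add by (simp add: right_diff_distrib mult.commute)
  have "?Q * (?E - ?Eb) \<in> MM k"
    by (rule in_M[OF zc_Zmon[OF s1] D_in_A]) (simp add: Zdiff_det[OF k d2])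
  moreover have "?Eb * (?Q - ?Qb) \<in> MM k"
    by (rule in_M[OF zc_Zmon D_in_A]) (use s2 Zdiff_det[OF k d1] in auto)
  ultimately show ?thesis unfolding eq by (intro MG_M M_add)
qed


lemma holo_MG:
  assumes k: "2 \<le> k" and dv: "int k dvd int (a + c)"
  shows "Zmon a 0 c 0 - Zmon 0 a 0 c \<in> MG k"
proof -
  consider (z) "a + c = 0" | (e) "a + c = k" | (g) "k < a + c"
  proof -
    have "a + c = 0 \<or> k \<le> a + c" using dv k
      by (metis dvd_imp_le int_dvd_int_iff neq0_conv)
    then show ?thesis using that by linarith
  qed
  then show ?thesis
  proof cases
    case z then show ?thesis by (simp add: MG_0)
  next
    case e
    then have ck: "k - a = c" by simp
    have "Zmon a 0 c 0 - Zmon 0 a 0 c = gg k a" by (simp add: gg_def ck)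
    moreover have "a \<le> k" using e by simp
    ultimately show ?thesis using MG_gg by simp
  next
    case g
    define a2 where "a2 = min a k"
    define c2 where "c2 = k - a2"
    have le: "a2 \<le> a" "c2 \<le> c" "a2 + c2 = k" using g by (auto simp: a2_def c2_def)
    have "Zmon a 0 c 0 - Zmon 0 a 0 c =
        Zmon ((a - a2) + a2) (0 + 0) ((c - c2) + c2) (0 + 0) - Zmon (0 + 0) ((a - a2) + a2) (0 + 0) ((c - c2) + c2)"
      using le by simp
    also have "\<dots> \<in> MG k"
    proof (rule split_M)
      show "0 < k" using k by simp
      have "int (a - a2) - int 0 + int (c - c2) - int 0 = int (a + c) - int k" using le by simp
      then show "int k dvd int (a - a2) - int 0 + int (c - c2) - int 0" using dv by simp
      have "int a2 - int 0 + int c2 - int 0 = int k" using le by simp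
      then show "int k dvd int a2 - int 0 + int c2 - int 0" by simp
      show "0 < a - a2 + 0 + (c - c2) + 0" using le g by simp
      show "0 < a2 + 0 + c2 + 0" using le k by simp
    qed
    finally show ?thesis .
  qed
qed

lemma Zdiff_MG:
  assumes k: "2 \<le> k" and dv: "int k dvd (int a - int b + int c - int d)"
  shows "Zmon a b c d - Zmon b a d c \<in> MG k"
proof -
  have k0: "0 < k" using k by simp
  consider (c1) "0 < a" "0 < d" | (c2) "0 < b" "0 < c" | (c3) "0 < a" "0 < b" | (c4) "0 < c" "0 < d"
    | (h) "b = 0" "d = 0" | (ah) "a = 0" "c = 0"
    by linarith
  then show ?thesis
  proof cases
    case c1
    show ?thesis
    proof (cases "a = 1 \<and> b = 0 \<and> c = 0 \<and> d = 1")
      case True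
      then have "Zmon a b c d - Zmon b a d c = Dl" by (simp add: Dl_def)
      then show ?thesis using MG_Dl by simp
    next
      case False
      have "Zmon a b c d - Zmon b a d c =
          Zmon ((a - 1) + 1) (b + 0) (c + 0) ((d - 1) + 1) - Zmon (b + 0) ((a - 1) + 1) ((d - 1) + 1) (c + 0)"
        using c1 by simp
      also have "\<dots> \<in> MG k"
      proof (rule split_M[OF k0])
        have eqh: "int (a - 1) - int b + int c - int (d - 1) = int a - int b + int c - int d" using c1 by simp
        show "int k dvd int (a - 1) - int b + int c - int (d - 1)" unfolding eqh by (rule dv)
        show "int k dvd int 1 - int 0 + int 0 - int 1" by simp
        show "0 < a - 1 + b + c + (d - 1)" using c1 False by linarith
      qed simp
      finally show ?thesis .
    qed
  next
    case c2
    show ?thesis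
    proof (cases "a = 0 \<and> b = 1 \<and> c = 1 \<and> d = 0")
      case True
      then have "Zmon a b c d - Zmon b a d c = - Dl" by (simp add: Dl_def)
      then show ?thesis using MG_neg[OF MG_Dl] by simp
    next
      case False
      have "Zmon a b c d - Zmon b a d c =
          Zmon (a + 0) ((b - 1) + 1) ((c - 1) + 1) (d + 0) - Zmon ((b - 1) + 1) (a + 0) (d + 0) ((c - 1) + 1)"
        using c2 by simp
      also have "\<dots> \<in> MG k"
      proof (rule split_M[OF k0])
        have eqh: "int a - int (b - 1) + int (c - 1) - int d = int a - int b + int c - int d" using c2 by simp
        show "int k dvd int a - int (b - 1) + int (c - 1) - int d" unfolding eqh by (rule dv)
        show "int k dvd int 0 - int 1 + int 1 - int 0" by simp
        show "0 < a + (b - 1) + (c - 1) + d" using c2 False by linarith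
      qed simp
      finally show ?thesis .
    qed
  next
    case c3
    show ?thesis
    proof (cases "a = 1 \<and> b = 1 \<and> c = 0 \<and> d = 0")
      case True then show ?thesis by (simp add: MG_0)
    next
      case False
      have "Zmon a b c d - Zmon b a d c =
          Zmon ((a - 1) + 1) ((b - 1) + 1) (c + 0) (d + 0) - Zmon ((b - 1) + 1) ((a - 1) + 1) (d + 0) (c + 0)"
        using c3 by simp
      also have "\<dots> \<in> MG k"
      proof (rule split_M[OF k0])
        have eqh: "int (a - 1) - int (b - 1) + int c - int d = int a - int b + int c - int d" using c3 by simp
        show "int k dvd int (a - 1) - int (b - 1) + int c - int d" unfolding eqh by (rule dv)
        show "int k dvd int 1 - int 1 + int 0 - int 0" by simp
        show "0 < a - 1 + (b - 1) + c + d" using c3 False by linarith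
      qed simp
      finally show ?thesis .
    qed
  next
    case c4
    show ?thesis
    proof (cases "a = 0 \<and> b = 0 \<and> c = 1 \<and> d = 1")
      case True then show ?thesis by (simp add: MG_0)
    next
      case False
      have "Zmon a b c d - Zmon b a d c =
          Zmon (a + 0) (b + 0) ((c - 1) + 1) ((d - 1) + 1) - Zmon (b + 0) (a + 0) ((d - 1) + 1) ((c - 1) + 1)"
        using c4 by simp
      also have "\<dots> \<in> MG k"
      proof (rule split_M[OF k0])
        have eqh: "int a - int b + int (c - 1) - int (d - 1) = int a - int b + int c - int d" using c4 by simp
        show "int k dvd int a - int b + int (c - 1) - int (d - 1)" unfolding eqh by (rule dv)
        show "int k dvd int 0 - int 0 + int 1 - int 1" by simp
        show "0 < a + b + (c - 1) + (d - 1)" using c4 False by linarith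
      qed simp
      finally show ?thesis .
    qed
  next
    case h
    have "int k dvd int (a + c)" using dv h by simp
    then show ?thesis using holo_MG[OF k] h by simp
  next
    case ah
    have "int k dvd - int (b + d)" using dv ah by simp
    then have "int k dvd int (b + d)" by (simp only: dvd_minus_iff)
    then have "Zmon b 0 d 0 - Zmon 0 b 0 d \<in> MG k" by (rule holo_MG[OF k])
    then have "- (Zmon b 0 d 0 - Zmon 0 b 0 d) \<in> MG k" by (rule MG_neg)
    then show ?thesis using ah by simp
  qed
qed



definition lamZ :: "complex \<Rightarrow> var \<Rightarrow> complex" where
  "lamZ \<mu> v = (case v of X1 \<Rightarrow> \<mu> | X2 \<Rightarrow> inverse \<mu> | Y1 \<Rightarrow> \<mu> | Y2 \<Rightarrow> inverse \<mu>)"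

lemma prod_lamZ: "(\<Prod>v\<in>UNIV. lamZ \<mu> v ^ Poly_Mapping.lookup m v) =
   \<mu> ^ Poly_Mapping.lookup m X1 * inverse \<mu> ^ Poly_Mapping.lookup m X2 *
   \<mu> ^ Poly_Mapping.lookup m Y1 * inverse \<mu> ^ Poly_Mapping.lookup m Y2"
  by (simp add: UNIV_var lamZ_def mult.assoc)

lemma inv_cis: "inverse (cis t) = cis (- t)"
  by (simp add: cis_inverse)

lemma rot_sigZ: "subst (asig (rot k j)) (sigZ v) = subst sigZ (dscale (lamZ (cis (2 * pi * real j / real k))) v)"
  by (cases v) (simp_all add: sigZ_def dscale_def lamZ_def subst_mult inv_cis
      rot_zz[unfolded act_eq] rot_zb rot_ww rot_wb)

abbreviation Zm :: "(var \<Rightarrow>\<^sub>0 nat) \<Rightarrow> poly4" where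
  "Zm m \<equiv> Zmon (Poly_Mapping.lookup m X1) (Poly_Mapping.lookup m X2) (Poly_Mapping.lookup m Y1) (Poly_Mapping.lookup m Y2)"
abbreviation Zmb :: "(var \<Rightarrow>\<^sub>0 nat) \<Rightarrow> poly4" where
  "Zmb m \<equiv> Zmon (Poly_Mapping.lookup m X2) (Poly_Mapping.lookup m X1) (Poly_Mapping.lookup m Y2) (Poly_Mapping.lookup m Y1)"
abbreviation wt :: "(var \<Rightarrow>\<^sub>0 nat) \<Rightarrow> int" where
  "wt m \<equiv> int (Poly_Mapping.lookup m X1) - int (Poly_Mapping.lookup m X2) + int (Poly_Mapping.lookup m Y1) - int (Poly_Mapping.lookup m Y2)"

lemma D_MG:
  assumes k: "2 \<le> k" and d: "d \<in> DD k"
  shows "d \<in> MG k"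
proof -
  have k0: "0 < k" using k by simp
  define d' where "d' = subst tau d"
  have dd': "d = subst sigZ d'" by (simp add: d'_def sigZ_tau)
  have rep: "d = (\<Sum>m\<in>Poly_Mapping.keys d'. pconst (Poly_Mapping.lookup d' m) * Zm m)"
    unfolding dd' subst_alt mon_sigZ ..
  let ?mu = "cis (2 * pi * real 1 / real k)"
  have wt: "int k dvd wt m" if m: "m \<in> Poly_Mapping.keys d'" for m
  proof -
    have "act (rot k 1) d = d"
      using d rot1_in[of k] k by (simp add: determinantal_def det_rot)
    moreover have "act (rot k 1) d = subst sigZ (subst (dscale (lamZ ?mu)) d')"
      unfolding dd' act_eq subst_comp rot_sigZ ..
    ultimately have "subst tau (subst sigZ (subst (dscale (lamZ ?mu)) d')) = d'"
      by (simp add: d'_def)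
    then have "subst (dscale (lamZ ?mu)) d' = d'" by (simp only: tau_sigZ)
    from scal_fix[OF this m]
    have "?mu ^ Poly_Mapping.lookup m X1 * cis (- (2 * pi * real 1 / real k)) ^ Poly_Mapping.lookup m X2 *
          ?mu ^ Poly_Mapping.lookup m Y1 * cis (- (2 * pi * real 1 / real k)) ^ Poly_Mapping.lookup m Y2 = 1"
      unfolding prod_lamZ inv_cis .
    then have c1: "cis (2 * pi * real 1 / real k * of_int (wt m)) = 1" by (simp only: cis_scal)
    have eq: "2 * pi * real 1 / real k * of_int (wt m) = 2 * pi * of_int (wt m) / real k" by simp
    have "cis (2 * pi * of_int (wt m) / real k) = 1" using c1 unfolding eq .
    then show ?thesis using iffD1[OF cis_root_eq1[OF k0]] by blast
  qed
  have r1: "act (refl k 0) d = pconst (-1) * d"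
    using d refl0_in[OF k0] by (simp add: determinantal_def det_refl)
  have r2: "act (refl k 0) d = (\<Sum>m\<in>Poly_Mapping.keys d'. pconst (Poly_Mapping.lookup d' m) * Zmb m)"
    by (subst rep) (simp add: act_eq subst_sum subst_mult act_refl_Zmon[unfolded act_eq])
  from r2[symmetric] r1 have "(\<Sum>m\<in>Poly_Mapping.keys d'. pconst (Poly_Mapping.lookup d' m) * Zmb m) = pconst (-1) * d"
    by (rule trans)
  then have s2: "(\<Sum>m\<in>Poly_Mapping.keys d'. pconst (Poly_Mapping.lookup d' m) * Zmb m) = - d"
    by (rule trans) (simp add: pconst_minus)
  have s1: "(\<Sum>m\<in>Poly_Mapping.keys d'. pconst (Poly_Mapping.lookup d' m) * (Zm m - Zmb m)) =
      (\<Sum>m\<in>Poly_Mapping.keys d'. pconst (Poly_Mapping.lookup d' m) * Zm m) -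
      (\<Sum>m\<in>Poly_Mapping.keys d'. pconst (Poly_Mapping.lookup d' m) * Zmb m)"
    by (simp only: right_diff_distrib sum_subtractf)
  have p2: "pconst 2 = 2" by (simp add: pconst_def)
  have s3: "(\<Sum>m\<in>Poly_Mapping.keys d'. pconst (Poly_Mapping.lookup d' m) * (Zm m - Zmb m)) = d - (- d)"
    unfolding s1 s2 by (simp only: rep[symmetric])
  have "pconst 2 * d = (\<Sum>m\<in>Poly_Mapping.keys d'. pconst (Poly_Mapping.lookup d' m) * (Zm m - Zmb m))"
    unfolding s3 p2 by (simp only: mult_2 diff_minus_eq_add)
  also have "\<dots> \<in> MG k"
    by (rule MG_sum, rule MG_smult, rule Zdiff_MG[OF k], rule wt)
  finally have "pconst (1/2) * (pconst 2 * d) \<in> MG k" by (rule MG_smult)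
  moreover have "pconst (1/2) * (pconst 2 * d) = d"
    by (simp only: mult.assoc[symmetric] pconst_mult) simp
  ultimately show ?thesis by simp
qed



lemma A_MG:
  assumes k: "2 \<le> k" and a: "a \<in> AA k"
  shows "a \<in> MG k"
  using a unfolding AA_eq
proof (induction rule: RM.span_induct_alt)
  case base then show ?case by (rule MG_0)
next
  case (step c x y)
  let ?c0 = "pconst (Poly_Mapping.lookup c 0)"
  have e: "c * x + y = ?c0 * x + ((c - ?c0) * x + y)"
    by (simp add: left_diff_distrib)
  have "zc (c - ?c0)" by (simp add: zc_def lookup_minus lookup_pconst)
  then have "(c - ?c0) * x \<in> MM k" using step(1) by (intro in_M D_in_A) simp
  then have 1: "(c - ?c0) * x \<in> MG k" by (rule MG_M)
  have 2: "?c0 * x \<in> MG k" using step(1) by (intro MG_smult D_MG[OF k]) simp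
  show ?case unfolding e by (intro MG_add 1 2 step(2))
qed

lemma hom_Dl: "hom 1 1 Dl"
  unfolding Dl_def using hom_Zmon[of 1 0 0 1] hom_Zmon[of 0 1 1 0] by (intro hom_diff) simp_all

lemma hom_gg: "a \<le> k \<Longrightarrow> hom a (k - a) (gg k a)"
  unfolding gg_def using hom_Zmon[of a 0 "k-a" 0] hom_Zmon[of 0 a 0 "k-a"] by (intro hom_diff) simp_all

lemma Dl_A: "0 < k \<Longrightarrow> Dl \<in> AA k"
  unfolding Dl_def by (rule D_in_A) (simp add: Zdiff_det)

lemma gg_A: "0 < k \<Longrightarrow> a \<le> k \<Longrightarrow> gg k a \<in> AA k"
  unfolding gg_def by (rule D_in_A) (simp add: Zdiff_det)

lemma phi_0: "phi k b 0 = 0" by (simp add: phi_def)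
lemma psi_0: "psi 0 = 0" by (simp add: psi_def)

lemma decomp:
  assumes k: "2 \<le> k" and pA: "p \<in> AA k" and ph: "hom i j p"
  obtains x e c where "x \<in> MM k" "hom i j x"
    "p = x + pconst e * Dl + pconst c * gg k i"
    "\<not> (i = 1 \<and> j = 1) \<Longrightarrow> e = 0" "i + j \<noteq> k \<Longrightarrow> c = 0" 
proof -
  have k0: "0 < k" using k by simp
  from A_MG[OF k pA] obtain x e c where x: "x \<in> MM k"
    and p: "p = x + pconst e * Dl + (\<Sum>a\<le>k. pconst (c a) * gg k a)" by (rule MG_E)
  have cz: "c b = 0" if b: "b \<le> k" "(b, k - b) \<noteq> (i, j)" for b
  proof -
    have "phi k b p = 0" using phi_hom[OF ph not_sym[OF b(2)]] .
    moreover have "phi k b p = (\<Sum>a\<le>k. c a * phi k b (gg k a))"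
      unfolding p by (simp add: phi_add phi_smult phi_sum phi_Dl phi_M[OF k x b(1)])
    moreover have "(\<Sum>a\<le>k. c a * phi k b (gg k a)) = (\<Sum>a\<le>k. if a = b then - (c b * 2 ^ k) else 0)"
      by (rule sum.cong) (use b k0 in \<open>auto simp: phi_gg\<close>)
    ultimately have "c b * 2 ^ k = 0" using b(1) by (simp add: sum.delta)
    then show ?thesis by simp
  qed
  have ez: "e = 0" if "\<not> (i = 1 \<and> j = 1)"
  proof -
    have "psi p = 0" using psi_hom[OF ph] that by simp
    moreover have "psi p = e * (-4)"
      unfolding p by (simp add: psi_add psi_smult psi_sum psi_Dl psi_gg psi_M[OF k x])
    ultimately show ?thesis by simp
  qed
  define c' where "c' = (if i + j = k then c i else 0)"
  have sumeq: "(\<Sum>a\<le>k. pconst (c a) * gg k a) = pconst c' * gg k i"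
  proof (cases "i + j = k")
    case True
    then have "(\<Sum>a\<le>k. pconst (c a) * gg k a) = (\<Sum>a\<le>k. if a = i then pconst (c i) * gg k i else 0)"
      by (intro sum.cong refl) (auto simp: cz)
    also have "\<dots> = pconst (c i) * gg k i" using True by (simp add: sum.delta)
    finally show ?thesis using True by (simp add: c'_def)
  next
    case False
    have "c a = 0" if "a \<in> {..k}" for a
      using that False by (intro cz) auto
    then have "(\<Sum>a\<le>k. pconst (c a) * gg k a) = (\<Sum>a\<le>k. 0)"
      by (intro sum.cong refl) simp
    then show ?thesis using False by (simp add: c'_def)
  qed
  have p2: "p = x + pconst e * Dl + pconst c' * gg k i" using p sumeq by simp
  have hx: "hom i j x"
  proof -
    have "x = p - pconst e * Dl - pconst c' * gg k i" using p2 by simp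
    moreover have "hom i j (pconst e * Dl)"
      using hom_smult[OF hom_Dl, of e] ez by (cases "i = 1 \<and> j = 1") auto
    moreover have "hom i j (pconst c' * gg k i)"
    proof (cases "i + j = k")
      case True
      then have ik: "i \<le> k" and kj: "k - i = j" by simp_all
      show ?thesis using hom_smult[OF hom_gg[OF ik], of c'] unfolding kj .
    next
      case False then show ?thesis by (simp add: c'_def)
    qed
    ultimately show ?thesis using ph by (metis hom_diff)
  qed
  show ?thesis
    by (rule that[OF x hx p2]) (auto simp: ez c'_def)
qed



lemma dim_insert_fin:
  assumes W: "finite W" "S \<subseteq> VS.span W" and x: "x \<notin> VS.span S"
  shows "VS.dim (insert x S) = Suc (VS.dim S)"
proof -
  obtain B where B: "B \<subseteq> S" "VS.independent B" "S \<subseteq> VS.span B" "card B = VS.dim S"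
    using VS.basis_exists[of S] by blast
  have BS: "B \<subseteq> VS.span S" using B(1) VS.span_superset[of S] by (rule subset_trans)
  have spB: "VS.span B = VS.span S" using VS.span_eq[of B S] BS B(3) by simp
  have "B \<subseteq> VS.span W" using B(1) W(2) by (rule subset_trans)
  then have fin: "finite B" using VS.independent_span_bound[OF W(1) B(2)] by simp
  have xB: "x \<notin> VS.span B" using spB x by simp
  have xnB: "x \<notin> B"
  proof
    assume "x \<in> B"
    then have "x \<in> VS.span B" by (rule VS.span_base)
    with xB show False by simp
  qed
  have ind: "VS.independent (insert x B)" by (rule VS.independent_insertI[OF xB B(2)])
  have sp2: "VS.span (insert x B) = VS.span (insert x S)"
  proof -
    have "insert x B \<subseteq> insert x S" using B(1) by auto
    then have 1: "insert x B \<subseteq> VS.span (insert x S)"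
      using VS.span_superset[of "insert x S"] by (rule subset_trans)
    have "VS.span B \<subseteq> VS.span (insert x B)" by (rule VS.span_mono) (rule subset_insertI)
    then have "S \<subseteq> VS.span (insert x B)" using B(3) by (rule subset_trans[rotated])
    moreover have "x \<in> VS.span (insert x B)" by (rule VS.span_base) simp
    ultimately have 2: "insert x S \<subseteq> VS.span (insert x B)" by simp
    show ?thesis using VS.span_eq[of "insert x B" "insert x S"] 1 2 by simp
  qed
  have "VS.dim (insert x S) = card (insert x B)" by (rule VS.dim_eq_card[OF sp2 ind])
  then show ?thesis using fin xnB B(4) by simp
qed

lemma notin_span_fun:
  assumes L0: "L 0 = 0" and Ladd: "\<And>p q. L (p + q) = L p + L q"
    and Lsm: "\<And>c p. L (pconst c * p) = c * L p"
    and S: "\<And>y. y \<in> S \<Longrightarrow> L y = 0" and Lx: "L x \<noteq> 0"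
  shows "x \<notin> VS.span S"
proof
  assume "x \<in> VS.span S"
  then have "L x = 0"
    by (induction rule: VS.span_induct_alt) (simp_all add: L0 Ladd Lsm S)
  with Lx show False by simp
qed

definition monW :: "nat \<Rightarrow> nat \<Rightarrow> poly4 set" where
  "monW i j = (\<lambda>(a,b,c,d). Poly_Mapping.single (mnm a b c d) 1) ` ({..i} \<times> {..i} \<times> {..j} \<times> {..j})"

lemma finite_monW: "finite (monW i j)" by (simp add: monW_def)

lemma hom_span: assumes "hom i j p" shows "p \<in> VS.span (monW i j)"
proof -
  have "p = (\<Sum>m\<in>Poly_Mapping.keys p. pconst (Poly_Mapping.lookup p m) * Poly_Mapping.single m 1)"
    by (subst poly_sum_singles) (simp add: pconst_single1)
  also have "\<dots> \<in> VS.span (monW i j)"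
  proof (rule VS.span_sum)
    fix m assume m: "m \<in> Poly_Mapping.keys p"
    then have "xdeg m = i" "ydeg m = j" using assms by (auto simp: hom_def)
    then have "(Poly_Mapping.lookup m X1, Poly_Mapping.lookup m X2, Poly_Mapping.lookup m Y1, Poly_Mapping.lookup m Y2)
        \<in> {..i} \<times> {..i} \<times> {..j} \<times> {..j}" by (auto simp: xdeg_def ydeg_def)
    then have "Poly_Mapping.single m 1 \<in> monW i j"
      unfolding monW_def by (subst mono_eq) (rule image_eqI[rotated], assumption, simp)
    then show "pconst (Poly_Mapping.lookup p m) * Poly_Mapping.single m 1 \<in> VS.span (monW i j)"
      by (intro VS.span_scale VS.span_base)
  qed
  finally show ?thesis .
qed



theorem corollary3p13:
  fixes k :: nat
  assumes "k \<ge> 2"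
  shows "\<forall>i j. catdim 1 k i j =
           (if i + j = k then 1 else 0) + (if i = 1 \<and> j = 1 then 1 else 0)"
proof (intro allI)
  fix i j
  have k: "2 \<le> k" using assms by simp
  have k0: "0 < k" using assms by simp
  define Aij where "Aij = bihom (AA k) i j"
  define Mij where "Mij = bihom (MM k) i j"
  have cat: "catdim 1 k i j = VS.dim Aij - VS.dim Mij"
    unfolding catdim_def Let_def pow1_AA cdim_def Aij_def Mij_def ..
  define G where "G = (if i = 1 \<and> j = 1 then {Dl} else {}) \<union> (if i + j = k then {gg k i} else {})"
  have Mij_M: "y \<in> MM k" if "y \<in> Mij" for y using that by (simp add: Mij_def bihom_alt)
  have Mij_hom: "hom i j y" if "y \<in> Mij" for y using that by (simp add: Mij_def bihom_alt)
  have G_hom: "hom i j g" if "g \<in> G" for g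
  proof -
    have "g = Dl \<and> i = 1 \<and> j = 1 \<or> g = gg k i \<and> i + j = k" using that
      by (auto simp: G_def split: if_splits)
    then show ?thesis
    proof
      assume "g = Dl \<and> i = 1 \<and> j = 1" then show ?thesis using hom_Dl by simp
    next
      assume h: "g = gg k i \<and> i + j = k"
      then have ik: "i \<le> k" and kj: "k - i = j" by auto
      show ?thesis using hom_gg[OF ik] unfolding kj using h by simp
    qed
  qed
  have G_A: "g \<in> AA k" if "g \<in> G" for g
    using that Dl_A[OF k0] gg_A[OF k0, of i] by (auto simp: G_def split: if_splits)
  have sub2: "G \<union> Mij \<subseteq> Aij"
    using G_hom G_A Mij_hom M_in_A Mij_M by (auto simp: Aij_def bihom_alt)
  have sub1: "Aij \<subseteq> VS.span (G \<union> Mij)"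
  proof
    fix p assume "p \<in> Aij"
    then have pA: "p \<in> AA k" and ph: "hom i j p" by (simp_all add: Aij_def bihom_alt)
    obtain x e c where x: "x \<in> MM k" "hom i j x" and p: "p = x + pconst e * Dl + pconst c * gg k i"
      and ez: "\<not> (i = 1 \<and> j = 1) \<Longrightarrow> e = 0" and cz: "i + j \<noteq> k \<Longrightarrow> c = 0"
      using decomp[OF k pA ph] by blast
    have 1: "x \<in> VS.span (G \<union> Mij)" using x by (intro VS.span_base) (simp add: Mij_def bihom_alt)
    have 2: "pconst e * Dl \<in> VS.span (G \<union> Mij)"
    proof (cases "i = 1 \<and> j = 1")
      case True then show ?thesis by (intro VS.span_scale VS.span_base) (simp add: G_def)
    next
      case False then show ?thesis using ez by (simp add: VS.span_zero)
    qed
    have 3: "pconst c * gg k i \<in> VS.span (G \<union> Mij)"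
    proof (cases "i + j = k")
      case True then show ?thesis by (intro VS.span_scale VS.span_base) (simp add: G_def)
    next
      case False then show ?thesis using cz by (simp add: VS.span_zero)
    qed
    show "p \<in> VS.span (G \<union> Mij)" unfolding p by (intro VS.span_add 1 2 3)
  qed
  have "VS.span Aij = VS.span (G \<union> Mij)"
    using VS.span_eq[of Aij "G \<union> Mij"] sub1 sub2 VS.span_superset[of Aij] by blast
  then have dimA: "VS.dim Aij = VS.dim (G \<union> Mij)" by (rule VS.span_eq_dim)
  have MW: "Mij \<subseteq> VS.span (monW i j)" using Mij_hom hom_span by blast
  have phiM: "phi k b y = 0" if "y \<in> Mij" "b \<le> k" for y b using phi_M[OF k Mij_M[OF that(1)] that(2)] .
  have psiM: "psi y = 0" if "y \<in> Mij" for y using psi_M[OF k Mij_M[OF that]] .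
  consider (n) "\<not> (i = 1 \<and> j = 1)" "i + j \<noteq> k" | (g) "\<not> (i = 1 \<and> j = 1)" "i + j = k"
    | (d) "i = 1 \<and> j = 1" "i + j \<noteq> k" | (dg) "i = 1 \<and> j = 1" "i + j = k" by blast
  then show "catdim 1 k i j = (if i + j = k then 1 else 0) + (if i = 1 \<and> j = 1 then 1 else 0)"
  proof cases
    case n
    then have "G = {}" by (simp add: G_def)
    then show ?thesis using n cat dimA by simp
  next
    case g
    then have GU: "G \<union> Mij = insert (gg k i) Mij" by (auto simp: G_def)
    have ik: "i \<le> k" using g by simp
    have "gg k i \<notin> VS.span Mij"
      by (rule notin_span_fun[where L = "phi k i"])
         (simp_all add: phi_0 phi_add phi_smult phiM ik phi_gg[OF k0 ik ik])
    then have "VS.dim (G \<union> Mij) = Suc (VS.dim Mij)" unfolding GU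
      by (rule dim_insert_fin[OF finite_monW MW])
    then show ?thesis using g cat dimA by simp
  next
    case d
    then have GU: "G \<union> Mij = insert Dl Mij" by (auto simp: G_def)
    have "Dl \<notin> VS.span Mij"
      by (rule notin_span_fun[where L = psi])
         (simp_all add: psi_0 psi_add psi_smult psiM psi_Dl)
    then have "VS.dim (G \<union> Mij) = Suc (VS.dim Mij)" unfolding GU
      by (rule dim_insert_fin[OF finite_monW MW])
    then show ?thesis using d cat dimA by simp
  next
    case dg
    then have i1: "i = 1" and j1: "j = 1" and k2: "k = 2" by simp_all
    then have GU: "G \<union> Mij = insert Dl (insert (gg k i) Mij)" by (auto simp: G_def)
    have ik: "i \<le> k" using dg by simp
    have "gg k i \<notin> VS.span Mij"
      by (rule notin_span_fun[where L = "phi k i"])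
         (simp_all add: phi_0 phi_add phi_smult phiM ik phi_gg[OF k0 ik ik])
    then have d1: "VS.dim (insert (gg k i) Mij) = Suc (VS.dim Mij)"
      by (rule dim_insert_fin[OF finite_monW MW])
    have ghom: "hom i j (gg k i)" using hom_gg[OF ik] k2 i1 j1 by simp
    have MW2: "insert (gg k i) Mij \<subseteq> VS.span (monW i j)"
      using MW hom_span[OF ghom] by simp
    have "Dl \<notin> VS.span (insert (gg k i) Mij)"
      by (rule notin_span_fun[where L = psi])
         (auto simp: psi_0 psi_add psi_smult psiM psi_Dl psi_gg)
    then have "VS.dim (insert Dl (insert (gg k i) Mij)) = Suc (VS.dim (insert (gg k i) Mij))"
      by (rule dim_insert_fin[OF finite_monW MW2])
    then show ?thesis using dg cat dimA GU d1 by simp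
  qed
qed


end
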